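(* Let $S=e_{12}+e_{23}\in M_3(\mathbb{C})$ and let $$\psi(x,z)=e^{xz}\left(Iz-Ix^{-1}+Sx^{-2}-S^2x^{-3}\right).$$ Let $\mathbb{A}$ be the set of all $\theta\in M_3(\mathbb{C})[x]$ for which there exists a matrix differential operator $B=B(z,\partial_z)$ with $(\psi B)(x,z)=\theta(x)\psi(x,z)$. Let $\Gamma$ be the set of all matrix polynomials of the form $$\begin{pmatrix} r_0^{11} & r_0^{12} & r_0^{13}\\ 0 & r_0^{22} & r_0^{23}\\ 0&0&r_0^{11}\end{pmatrix}+\begin{pmatrix} r_1^{11} & r_1^{12} & r_1^{13}\\ r_0^{22}-r_0^{11} & r_1^{22} & r_1^{23}\\ 0 & r_0^{22}-r_0^{11} & r_1^{11}+r_0^{23}-r_0^{12}\end{pmatrix}x$$ $$+\begin{pmatrix} r_2^{11} & r_2^{12} & r_2^{13}\\ r_1^{22}-r_1^{11}-r_0^{23}+r_0^{12} & r_2^{22} & r_2^{23}\\ r_0^{22}-r_0^{11} & r_1^{22}-r_1^{11} & r_2^{11}+r_1^{23}-r_1^{12}\end{pmatrix}x^2+\begin{pmatrix} r_3^{11} & r_3^{12} & r_3^{13}\\ r_3^{21} & r_3^{22} & r_3^{23}\\ r_1^{22}-2r_1^{11}-r_0^{23}+r_0^{12} & r_3^{32} & r_3^{33}\end{pmatrix}x^3$$ $$+\begin{pmatrix} r_4^{11} & r_4^{12} & r_4^{13}\\ r_4^{21} & r_4^{22} & r_4^{23}\\ r_3^{32}+r_3^{21}-r_2^{22}-r_2^{11}+r_1^{12}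 & r_4^{32} & r_4^{33}\end{pmatrix}x^4$$ $$+\begin{pmatrix} r_5^{11} & r_5^{12} & r_5^{13}\\ r_5^{21} & r_5^{22} & r_5^{23}\\ r_4^{32}+r_4^{21}-r_3^{33}-r_3^{22}-r_3^{11}+r_2^{23}+r_2^{12}-r_1^{13} & r_5^{32} & r_5^{33}\end{pmatrix}x^5+x^6p(x),$$ where $p\in M_3(\mathbb{C})[x]$ and all the variables $r_k^{ij}\in\mathbb{C}$ appearing are arbitrary. Then $\Gamma=\mathbb{A}$. Furthermore, $\mathbb{A}$ has the presentation $\mathbb{A}\cong\mathbb{C}\langle\alpha_2,\alpha_3\rangle/I$, where $I$ is the two-sided ideal $$I=\langle\alpha_2^3,\ \alpha_3^2-\alpha_3,\ (\alpha_3\alpha_2)^2\alpha_3-4\alpha_3\alpha_2^2\alpha_3\rangle.$$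
   Context: $e_{r,s}$ denotes the matrix with $1$ in entry $(r,s)$ and zeros elsewhere, and $I$ (in $\psi$) is the identity matrix. A matrix differential operator $B=B(z,\partial_z)$ acts on $\psi$ from the right: $(\psi B)(x,z)=\sum_{j=0}^m \partial_z^j\psi(x,z)\cdot b_j(z)$, with $b_j$ matrix-valued functions of $z$. $\mathbb{C}\langle\alpha_2,\alpha_3\rangle$ denotes the free (noncommutative) associative $\mathbb{C}$-algebra on $\alpha_2,\alpha_3$, and a presentation means an algebra isomorphism $\mathbb{C}\langle\alpha_2,\alpha_3\rangle/I\to\mathbb{A}$. *)

theory Defs
  imports "HOL-Analysis.Analysis" "HOL-Computational_Algebra.Polynomial"
begin

text \<open>M_3(C) is complex^3^3 with matrix product **. M_3(C)[x] is rendered as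
  3x3 matrices with entries in complex poly (canonically isomorphic).\<close>

definition mat3 :: "'a \<Rightarrow> 'a \<Rightarrow> 'a \<Rightarrow> 'a \<Rightarrow> 'a \<Rightarrow> 'a \<Rightarrow> 'a \<Rightarrow> 'a \<Rightarrow> 'a \<Rightarrow> 'a^3^3" where
  "mat3 a11 a12 a13 a21 a22 a23 a31 a32 a33 =
     (\<chi> i j. if i = 1 then (if j = 1 then a11 else if j = 2 then a12 else a13)
             else if i = 2 then (if j = 1 then a21 else if j = 2 then a22 else a23)
             else (if j = 1 then a31 else if j = 2 then a32 else a33))"

definition Smat :: "complex^3^3" where
  "Smat = mat3 0 1 0  0 0 1  0 0 0"

definition psi :: "complex \<Rightarrow> complex \<Rightarrow> complex^3^3" where
  "psi x z = (\<chi> i j. exp (x * z) *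
      ((mat z - mat (1 / x) :: complex^3^3) $ i $ j + Smat $ i $ j / x ^ 2
        - (Smat ** Smat) $ i $ j / x ^ 3))"

definition dpsi :: "nat \<Rightarrow> complex \<Rightarrow> complex \<Rightarrow> complex^3^3" where
  "dpsi j x z = (\<chi> a b. (deriv ^^ j) (\<lambda>w. psi x w $ a $ b) z)"

definition mpoly_eval :: "complex poly^3^3 \<Rightarrow> complex \<Rightarrow> complex^3^3" where
  "mpoly_eval \<theta> x = (\<chi> i j. poly (\<theta> $ i $ j) x)"

text \<open>The algebra A: theta such that psi B = theta psi for a matrix differential
  operator B = sum_{j=0}^m d_z^j (.) b_j(z) acting from the right.\<close>
definition A_set :: "(complex poly^3^3) set" where
  "A_set = {\<theta>. \<exists>(b :: nat \<Rightarrow> complex \<Rightarrow> complex^3^3) (m :: nat).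
      \<forall>x z. x \<noteq> 0 \<longrightarrow> (\<Sum>j\<le>m. dpsi j x z ** b j z) = mpoly_eval \<theta> x ** psi x z}"

text \<open>r k i j stands for r_k^{ij}.\<close>
definition gcoef :: "(nat \<Rightarrow> nat \<Rightarrow> nat \<Rightarrow> complex) \<Rightarrow> nat \<Rightarrow> complex^3^3" where
  "gcoef r k =
    (if k = 0 then
       mat3 (r 0 1 1) (r 0 1 2) (r 0 1 3)
            0 (r 0 2 2) (r 0 2 3)
            0 0 (r 0 1 1)
     else if k = 1 then
       mat3 (r 1 1 1) (r 1 1 2) (r 1 1 3)
            (r 0 2 2 - r 0 1 1) (r 1 2 2) (r 1 2 3)
            0 (r 0 2 2 - r 0 1 1) (r 1 1 1 + r 0 2 3 - r 0 1 2)
     else if k = 2 then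
       mat3 (r 2 1 1) (r 2 1 2) (r 2 1 3)
            (r 1 2 2 - r 1 1 1 - r 0 2 3 + r 0 1 2) (r 2 2 2) (r 2 2 3)
            (r 0 2 2 - r 0 1 1) (r 1 2 2 - r 1 1 1) (r 2 1 1 + r 1 2 3 - r 1 1 2)
     else if k = 3 then
       mat3 (r 3 1 1) (r 3 1 2) (r 3 1 3)
            (r 3 2 1) (r 3 2 2) (r 3 2 3)
            (r 1 2 2 - 2 * r 1 1 1 - r 0 2 3 + r 0 1 2) (r 3 3 2) (r 3 3 3)
     else if k = 4 then
       mat3 (r 4 1 1) (r 4 1 2) (r 4 1 3)
            (r 4 2 1) (r 4 2 2) (r 4 2 3)
            (r 3 3 2 + r 3 2 1 - r 2 2 2 - r 2 1 1 + r 1 1 2) (r 4 3 2) (r 4 3 3)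
     else
       mat3 (r 5 1 1) (r 5 1 2) (r 5 1 3)
            (r 5 2 1) (r 5 2 2) (r 5 2 3)
            (r 4 3 2 + r 4 2 1 - r 3 3 3 - r 3 2 2 - r 3 1 1 + r 2 2 3 + r 2 1 2 - r 1 1 3)
            (r 5 3 2) (r 5 3 3))"

definition gamma_poly :: "(nat \<Rightarrow> nat \<Rightarrow> nat \<Rightarrow> complex) \<Rightarrow> complex poly^3^3 \<Rightarrow> complex poly^3^3" where
  "gamma_poly r p = (\<chi> i j. (\<Sum>k<6. monom (gcoef r k $ i $ j) k) + monom 1 6 * p $ i $ j)"

definition Gamma_set :: "(complex poly^3^3) set" where
  "Gamma_set = {\<theta>. \<exists>r p. \<theta> = gamma_poly r p}"

datatype gen = A2 | A3

text \<open>Elements of the free associative algebra: finitely supported functions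
  from words to complex coefficients.\<close>
type_synonym ncpoly = "gen list \<Rightarrow> complex"

definition nc_fin :: "ncpoly \<Rightarrow> bool" where
  "nc_fin f \<longleftrightarrow> finite {w. f w \<noteq> 0}"

definition nc_mon :: "gen list \<Rightarrow> ncpoly" where
  "nc_mon u = (\<lambda>w. if w = u then 1 else 0)"

definition nc_mult :: "ncpoly \<Rightarrow> ncpoly \<Rightarrow> ncpoly" where
  "nc_mult f g = (\<lambda>w. \<Sum>i\<le>length w. f (take i w) * g (drop i w))"

inductive_set nc_ideal :: "ncpoly set \<Rightarrow> ncpoly set" for G where
  gen: "g \<in> G \<Longrightarrow> g \<in> nc_ideal G"
| zero: "(\<lambda>w. 0) \<in> nc_ideal G"
| add: "f \<in> nc_ideal G \<Longrightarrow> g \<in> nc_ideal G \<Longrightarrow> (\<lambda>w. f w + g w) \<in> nc_ideal G"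
| lmult: "f \<in> nc_ideal G \<Longrightarrow> nc_fin a \<Longrightarrow> nc_mult a f \<in> nc_ideal G"
| rmult: "f \<in> nc_ideal G \<Longrightarrow> nc_fin a \<Longrightarrow> nc_mult f a \<in> nc_ideal G"

definition rel_I :: "ncpoly set" where
  "rel_I = nc_ideal
     { nc_mon [A2, A2, A2],
       (\<lambda>w. nc_mon [A3, A3] w - nc_mon [A3] w),
       (\<lambda>w. nc_mon [A3, A2, A3, A2, A3] w - 4 * nc_mon [A3, A2, A2, A3] w) }"

definition msmult :: "complex \<Rightarrow> complex poly^3^3 \<Rightarrow> complex poly^3^3" where
  "msmult c M = (\<chi> i j. smult c (M $ i $ j))"

fun gen_val :: "complex poly^3^3 \<Rightarrow> complex poly^3^3 \<Rightarrow> gen \<Rightarrow> complex poly^3^3" where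
  "gen_val a2 a3 A2 = a2"
| "gen_val a2 a3 A3 = a3"

definition word_val :: "complex poly^3^3 \<Rightarrow> complex poly^3^3 \<Rightarrow> gen list \<Rightarrow> complex poly^3^3" where
  "word_val a2 a3 w = foldr (\<lambda>l M. gen_val a2 a3 l ** M) w (mat 1)"

definition nc_eval :: "complex poly^3^3 \<Rightarrow> complex poly^3^3 \<Rightarrow> ncpoly \<Rightarrow> complex poly^3^3" where
  "nc_eval a2 a3 f = (\<Sum>w\<in>{w. f w \<noteq> 0}. msmult (f w) (word_val a2 a3 w))"

end

theory Submission
  imports Defs
begin


lemma three_neq[simp]: "(2::3) \<noteq> 1" "(3::3) \<noteq> 1" "(3::3) \<noteq> 2" "(1::3) \<noteq> 2" "(1::3) \<noteq> 3" "(2::3) \<noteq> 3"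
  by (simp_all add: eq_commute)

lemma mat3_nth[simp]:
  "mat3 a11 a12 a13 a21 a22 a23 a31 a32 a33 $ 1 $ 1 = a11"
  "mat3 a11 a12 a13 a21 a22 a23 a31 a32 a33 $ 1 $ 2 = a12"
  "mat3 a11 a12 a13 a21 a22 a23 a31 a32 a33 $ 1 $ 3 = a13"
  "mat3 a11 a12 a13 a21 a22 a23 a31 a32 a33 $ 2 $ 1 = a21"
  "mat3 a11 a12 a13 a21 a22 a23 a31 a32 a33 $ 2 $ 2 = a22"
  "mat3 a11 a12 a13 a21 a22 a23 a31 a32 a33 $ 2 $ 3 = a23"
  "mat3 a11 a12 a13 a21 a22 a23 a31 a32 a33 $ 3 $ 1 = a31"
  "mat3 a11 a12 a13 a21 a22 a23 a31 a32 a33 $ 3 $ 2 = a32"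
  "mat3 a11 a12 a13 a21 a22 a23 a31 a32 a33 $ 3 $ 3 = a33"
  by (simp_all add: mat3_def)

lemma mat3_eta: "M = mat3 (M$1$1) (M$1$2) (M$1$3) (M$2$1) (M$2$2) (M$2$3) (M$3$1) (M$3$2) (M$3$3)"
  unfolding vec_eq_iff forall_3 by simp

lemma mat3_eq_iff:
  "mat3 a11 a12 a13 a21 a22 a23 a31 a32 a33 = mat3 b11 b12 b13 b21 b22 b23 b31 b32 b33 \<longleftrightarrow>
   a11 = b11 \<and> a12 = b12 \<and> a13 = b13 \<and> a21 = b21 \<and> a22 = b22 \<and> a23 = b23 \<and> a31 = b31 \<and> a32 = b32 \<and> a33 = b33"
  unfolding vec_eq_iff forall_3 by simp

lemma mat3_mult:
  "(mat3 a11 a12 a13 a21 a22 a23 a31 a32 a33 :: 'a::semiring_1^3^3) ** mat3 b11 b12 b13 b21 b22 b23 b31 b32 b33 =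
   mat3 (a11*b11+a12*b21+a13*b31) (a11*b12+a12*b22+a13*b32) (a11*b13+a12*b23+a13*b33)
        (a21*b11+a22*b21+a23*b31) (a21*b12+a22*b22+a23*b32) (a21*b13+a22*b23+a23*b33)
        (a31*b11+a32*b21+a33*b31) (a31*b12+a32*b22+a33*b32) (a31*b13+a32*b23+a33*b33)"
  unfolding vec_eq_iff forall_3 matrix_matrix_mult_def by (simp add: sum_3)

lemma mat3_add:
  "(mat3 a11 a12 a13 a21 a22 a23 a31 a32 a33 :: 'a::plus^3^3) + mat3 b11 b12 b13 b21 b22 b23 b31 b32 b33 =
   mat3 (a11+b11) (a12+b12) (a13+b13) (a21+b21) (a22+b22) (a23+b23) (a31+b31) (a32+b32) (a33+b33)"
  unfolding vec_eq_iff forall_3 by simp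

lemma mat3_diff:
  "(mat3 a11 a12 a13 a21 a22 a23 a31 a32 a33 :: 'a::minus^3^3) - mat3 b11 b12 b13 b21 b22 b23 b31 b32 b33 =
   mat3 (a11-b11) (a12-b12) (a13-b13) (a21-b21) (a22-b22) (a23-b23) (a31-b31) (a32-b32) (a33-b33)"
  unfolding vec_eq_iff forall_3 by simp

lemma mat3_zero: "(0::'a::zero^3^3) = mat3 0 0 0 0 0 0 0 0 0"
  unfolding vec_eq_iff forall_3 by simp

lemma mat3_one: "(mat 1::'a::{zero,one}^3^3) = mat3 1 0 0 0 1 0 0 0 1"
  unfolding vec_eq_iff forall_3 by (simp add: mat_def)

lemma mat3_mat: "(mat c::'a::{zero}^3^3) = mat3 c 0 0 0 c 0 0 0 c"
  unfolding vec_eq_iff forall_3 by (simp add: mat_def)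

lemma mpoly_eval_mat3:
  "mpoly_eval (mat3 a11 a12 a13 a21 a22 a23 a31 a32 a33) x =
   mat3 (poly a11 x) (poly a12 x) (poly a13 x) (poly a21 x) (poly a22 x) (poly a23 x) (poly a31 x) (poly a32 x) (poly a33 x)"
  unfolding mpoly_eval_def vec_eq_iff forall_3 by simp

lemma mpoly_eval_mult: "mpoly_eval (A ** B) x = mpoly_eval A x ** mpoly_eval B x"
  by (subst (1 2) mat3_eta[of A], subst (1 2) mat3_eta[of B])
     (simp only: mat3_mult mpoly_eval_mat3 poly_add poly_mult)

lemma mpoly_eval_add: "mpoly_eval (A + B) x = mpoly_eval A x + mpoly_eval B x"
  unfolding mpoly_eval_def vec_eq_iff by simp

lemma mpoly_eval_diff: "mpoly_eval (A - B) x = mpoly_eval A x - mpoly_eval B x"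
  unfolding mpoly_eval_def vec_eq_iff by simp

lemma mpoly_eq_iff_nz: "A = B \<longleftrightarrow> (\<forall>x. x \<noteq> 0 \<longrightarrow> mpoly_eval A x = mpoly_eval B x)"
proof
  assume h: "\<forall>x. x \<noteq> 0 \<longrightarrow> mpoly_eval A x = mpoly_eval B x"
  have "A $ i $ j = B $ i $ j" for i j
  proof -
    have "\<forall>x. x \<noteq> 0 \<longrightarrow> poly (A$i$j - B$i$j) x = 0"
      using h unfolding mpoly_eval_def vec_eq_iff by simp
    hence "{x. poly (A$i$j - B$i$j) x = 0} \<supseteq> UNIV - {0}" by auto
    moreover have "infinite (UNIV - {0::complex})"
      by (simp add: infinite_UNIV_char_0)
    ultimately have "infinite {x. poly (A$i$j - B$i$j) x = 0}"
      using finite_subset by blast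
    hence "A$i$j - B$i$j = 0" using poly_roots_finite by blast
    thus ?thesis by simp
  qed
  thus "A = B" by (simp add: vec_eq_iff)
qed simp


lemma deriv_iter_exp:
  fixes x d c :: complex
  shows "(deriv ^^ j) (\<lambda>w. exp (x*w) * (w*d + c)) =
         (\<lambda>w. exp (x*w) * (x^j * (w*d + c) + of_nat j * x^(j - 1) * d))"
proof (induction j)
  case 0 then show ?case by simp
next
  case (Suc j)
  have "\<And>w. ((\<lambda>w. exp (x*w) * (x^j * (w*d + c) + of_nat j * x^(j - 1) * d)) has_field_derivative
        exp (x*w) * (x^(Suc j) * (w*d + c) + of_nat (Suc j) * x^(Suc j - 1) * d)) (at w)"
  proof -
    fix w
    have "((\<lambda>w. exp (x*w) * (x^j * (w*d + c) + of_nat j * x^(j - 1) * d)) has_field_derivative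
        (exp (x*w) * x) * (x^j * (w*d + c) + of_nat j * x^(j - 1) * d) + exp (x*w) * (x^j * d)) (at w)"
      by (auto intro!: derivative_eq_intros)
    moreover have "(exp (x*w) * x) * (x^j * (w*d + c) + of_nat j * x^(j - 1) * d) + exp (x*w) * (x^j * d)
       = exp (x*w) * (x^(Suc j) * (w*d + c) + of_nat (Suc j) * x^(Suc j - 1) * d)"
    proof (cases j)
      case 0 then show ?thesis by (simp add: algebra_simps)
    next
      case (Suc k) then show ?thesis by (simp add: algebra_simps)
    qed
    ultimately show "?thesis w" by simp
  qed
  hence "deriv (\<lambda>w. exp (x*w) * (x^j * (w*d + c) + of_nat j * x^(j - 1) * d)) =
        (\<lambda>w. exp (x*w) * (x^(Suc j) * (w*d + c) + of_nat (Suc j) * x^(Suc j - 1) * d))"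
    using DERIV_imp_deriv by blast
  then show ?case using Suc.IH by simp
qed


definition Xp :: "complex poly" where "Xp = [:0, 1:]"

definition Um :: "complex poly^3^3" where "Um = mat3 0 1 Xp 1 Xp 0 Xp 0 0"
definition Tm :: "complex poly^3^3" where "Tm = mat3 Xp 1 0 0 Xp 1 0 0 Xp"
definition Uadj :: "complex poly^3^3" where "Uadj = mat3 0 0 (Xp^2) 0 (Xp^2) (-Xp) (Xp^2) (-Xp) 1"
definition Nm :: "complex poly^3^3" where "Nm = mat3 (Xp^2) (-Xp) 1 0 (Xp^2) (-Xp) 0 0 (Xp^2)"
definition Cm :: "complex \<Rightarrow> complex \<Rightarrow> complex \<Rightarrow> complex poly^3^3" where
  "Cm c0 c1 c2 = mat3 [:c0:] [:c1:] [:c2:] 0 [:c0:] [:c1:] 0 0 [:c0:]"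
definition Kc :: "complex \<Rightarrow> complex^3^3" where
  "Kc x = mat3 (1/x) (-1/x^2) (1/x^3) 0 (1/x) (-1/x^2) 0 0 (1/x)"
definition mderiv :: "complex poly^3^3 \<Rightarrow> complex poly^3^3" where
  "mderiv M = (\<chi> i j. pderiv (M$i$j))"
definition Wset :: "(complex poly^3^3) set" where
  "Wset = {\<theta>. \<exists>c0 c1 c2 Q. \<theta> = Cm c0 c1 c2 + Um ** Q ** Tm}"

lemma poly_Xp[simp]: "poly Xp x = x" by (simp add: Xp_def)
lemma pderiv_Xp[simp]: "pderiv Xp = 1" by (simp add: Xp_def pderiv_pCons)

lemma eval_Um: "mpoly_eval Um x = mat3 0 1 x 1 x 0 x 0 0"
  by (simp add: Um_def mpoly_eval_mat3)
lemma eval_Tm: "mpoly_eval Tm x = mat3 x 1 0 0 x 1 0 0 x"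
  by (simp add: Tm_def mpoly_eval_mat3)
lemma eval_Uadj: "mpoly_eval Uadj x = mat3 0 0 (x^2) 0 (x^2) (-x) (x^2) (-x) 1"
  by (simp add: Uadj_def mpoly_eval_mat3)
lemma eval_Nm: "mpoly_eval Nm x = mat3 (x^2) (-x) 1 0 (x^2) (-x) 0 0 (x^2)"
  by (simp add: Nm_def mpoly_eval_mat3)
lemma eval_Cm: "mpoly_eval (Cm c0 c1 c2) x = mat3 c0 c1 c2 0 c0 c1 0 0 c0"
  by (simp add: Cm_def mpoly_eval_mat3)

lemma mderiv_mat3: "mderiv (mat3 a11 a12 a13 a21 a22 a23 a31 a32 a33) =
  mat3 (pderiv a11) (pderiv a12) (pderiv a13) (pderiv a21) (pderiv a22) (pderiv a23) (pderiv a31) (pderiv a32) (pderiv a33)"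
  unfolding mderiv_def vec_eq_iff forall_3 by simp

lemma mderiv_add: "mderiv (A + B) = mderiv A + mderiv B"
  unfolding mderiv_def vec_eq_iff by (simp add: pderiv_add)

lemma mderiv_mult: "mderiv (A ** B) = mderiv A ** B + A ** mderiv B"
  by (subst (1 2 3) mat3_eta[of A], subst (1 2 3) mat3_eta[of B])
     (simp only: mat3_mult mderiv_mat3 mat3_add pderiv_add pderiv_mult mat3_eq_iff, simp add: algebra_simps)

lemma mderiv_Cm: "mderiv (Cm c0 c1 c2) = 0"
  by (simp add: Cm_def mderiv_mat3 mat3_zero pderiv_pCons)

lemma eval_mderiv_Um: "mpoly_eval (mderiv Um) x = mat3 0 0 1 0 1 0 1 0 0"
  by (simp add: Um_def mderiv_mat3 mpoly_eval_mat3)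

lemma KU: "x \<noteq> 0 \<Longrightarrow> Kc x ** mpoly_eval Um x = mpoly_eval (mderiv Um) x"
  by (simp add: eval_Um eval_mderiv_Um Kc_def mat3_mult mat3_eq_iff field_simps power2_eq_square power3_eq_cube)

lemma TK: "x \<noteq> 0 \<Longrightarrow> mpoly_eval Tm x ** Kc x = mat 1"
  by (simp add: eval_Tm Kc_def mat3_mult mat3_one mat3_eq_iff field_simps power2_eq_square power3_eq_cube)

lemma KT: "x \<noteq> 0 \<Longrightarrow> Kc x ** mpoly_eval Tm x = mat 1"
  by (simp add: eval_Tm Kc_def mat3_mult mat3_one mat3_eq_iff field_simps power2_eq_square power3_eq_cube)

lemma KC: "Kc x ** mpoly_eval (Cm c0 c1 c2) x = mpoly_eval (Cm c0 c1 c2) x ** Kc x"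
  by (simp add: eval_Cm Kc_def mat3_mult mat3_eq_iff algebra_simps)

lemma U_Uadj: "Um ** Uadj = mat3 (Xp^3) 0 0 0 (Xp^3) 0 0 0 (Xp^3)"
  by (simp add: Um_def Uadj_def mat3_mult mat3_eq_iff algebra_simps power2_eq_square power3_eq_cube)

lemma N_T: "Nm ** Tm = mat3 (Xp^3) 0 0 0 (Xp^3) 0 0 0 (Xp^3)"
  by (simp add: Nm_def Tm_def mat3_mult mat3_eq_iff algebra_simps power2_eq_square power3_eq_cube)


definition smat :: "complex \<Rightarrow> complex^3^3 \<Rightarrow> complex^3^3" where
  "smat c M = (\<chi> a b. c * M$a$b)"

lemma smat_mat3: "smat c (mat3 a11 a12 a13 a21 a22 a23 a31 a32 a33) =
  mat3 (c*a11) (c*a12) (c*a13) (c*a21) (c*a22) (c*a23) (c*a31) (c*a32) (c*a33)"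
  unfolding smat_def vec_eq_iff forall_3 by simp

lemma Smat_mat3: "Smat = mat3 0 1 0 0 0 1 0 0 0" by (simp add: Smat_def)

lemma psi_eq: "psi x w = smat (exp (x*w)) (mat w - Kc x)"
  unfolding psi_def smat_def Smat_mat3 Kc_def
  by (simp add: vec_eq_iff forall_3 mat3_mult mat_def field_simps power2_eq_square power3_eq_cube)

lemma psi_entry: "(\<lambda>w. psi x w $ a $ b) = (\<lambda>w. exp (x*w) * (w * (mat 1::complex^3^3)$a$b + (- Kc x $a$b)))"
  unfolding psi_eq smat_def by (simp add: mat_def algebra_simps fun_eq_iff)

lemma dpsi_eq: "dpsi j x z = smat (exp (x*z))
   (smat (x^j) (mat z - Kc x) + smat (of_nat j * x^(j-1)) (mat 1))"
  unfolding dpsi_def psi_entry deriv_iter_exp smat_def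
  by (simp add: vec_eq_iff mat_def algebra_simps)

lemma sum_coeff_poly: "degree (p::complex poly) \<le> m \<Longrightarrow> (\<Sum>j\<le>m. x^j * coeff p j) = poly p x"
proof -
  assume "degree p \<le> m"
  hence "(\<Sum>j\<le>m. x^j * coeff p j) = (\<Sum>j\<le>degree p. x^j * coeff p j)"
    by (intro sum.mono_neutral_right) (auto simp: coeff_eq_0)
  also have "\<dots> = (\<Sum>j\<le>degree p. coeff p j * x^j)" by (simp add: mult.commute)
  finally show ?thesis by (simp add: poly_altdef)
qed

lemma sum_coeff_pderiv: "degree (p::complex poly) \<le> m \<Longrightarrow>
   (\<Sum>j\<le>m. of_nat j * x^(j-1) * coeff p j) = poly (pderiv p) x"
proof -
  assume d: "degree p \<le> m"
  have "degree (pderiv p) \<le> m" using d degree_pderiv[of p] by linarith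
  hence "poly (pderiv p) x = (\<Sum>j\<le>m. x^j * coeff (pderiv p) j)"
    using sum_coeff_poly by metis
  also have "\<dots> = (\<Sum>j\<le>m. x^j * (of_nat (Suc j) * coeff p (Suc j)))"
    by (simp add: coeff_pderiv)
  also have "\<dots> = (\<Sum>j<Suc m. x^j * (of_nat (Suc j) * coeff p (Suc j)))"
    by (simp add: lessThan_Suc_atMost)
  also have "\<dots> = (\<Sum>j<Suc (Suc m). of_nat j * x^(j-1) * coeff p j)"
    by (subst sum.lessThan_Suc_shift) (simp add: algebra_simps)
  also have "\<dots> = (\<Sum>j\<le>Suc m. of_nat j * x^(j-1) * coeff p j)"
    by (simp add: lessThan_Suc_atMost)
  also have "\<dots> = (\<Sum>j\<le>m. of_nat j * x^(j-1) * coeff p j)"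
    using d by (simp add: coeff_eq_0)
  finally show ?thesis by simp
qed

definition cmat :: "complex poly^3^3 \<Rightarrow> nat \<Rightarrow> complex^3^3" where
  "cmat \<beta> j = (\<chi> a c. coeff (\<beta>$a$c) j)"

lemma sum_mat_component: "(\<Sum>j\<in>J. (M j :: complex^3^3)) $ a $ c = (\<Sum>j\<in>J. M j $ a $ c)"
  by simp

lemma dpsi_sum:
  assumes deg: "\<forall>a c. degree (\<beta>$a$c) \<le> m"
  shows "(\<Sum>j\<le>m. dpsi j x z ** cmat \<beta> j) =
     smat (exp (x*z)) ((mat z - Kc x) ** mpoly_eval \<beta> x + mpoly_eval (mderiv \<beta>) x)"
proof -
  have "(\<Sum>j\<le>m. dpsi j x z ** cmat \<beta> j) $ a $ c =
     smat (exp (x*z)) ((mat z - Kc x) ** mpoly_eval \<beta> x + mpoly_eval (mderiv \<beta>) x) $ a $ c" for a c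
  proof -
    have "(\<Sum>j\<le>m. dpsi j x z ** cmat \<beta> j) $ a $ c =
       (\<Sum>j\<le>m. \<Sum>l\<in>UNIV. exp (x*z) * ((x^j * (mat z - Kc x)$a$l + of_nat j * x^(j-1) * (mat 1::complex^3^3)$a$l)) * coeff (\<beta>$l$c) j)"
      by (simp add: dpsi_eq smat_def matrix_matrix_mult_def cmat_def sum_distrib_left algebra_simps)
    also have "\<dots> = (\<Sum>l\<in>UNIV. \<Sum>j\<le>m. exp (x*z) * ((x^j * (mat z - Kc x)$a$l + of_nat j * x^(j-1) * (mat 1::complex^3^3)$a$l)) * coeff (\<beta>$l$c) j)"
      by (rule sum.swap)
    also have "\<dots> = (\<Sum>l\<in>UNIV. exp (x*z) * ((mat z - Kc x)$a$l * (\<Sum>j\<le>m. x^j * coeff (\<beta>$l$c) j)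
          + (mat 1::complex^3^3)$a$l * (\<Sum>j\<le>m. of_nat j * x^(j-1) * coeff (\<beta>$l$c) j)))"
    proof (rule sum.cong[OF refl])
      fix l
      show "(\<Sum>j\<le>m. exp (x*z) * ((x^j * (mat z - Kc x)$a$l + of_nat j * x^(j-1) * (mat 1::complex^3^3)$a$l)) * coeff (\<beta>$l$c) j)
        = exp (x*z) * ((mat z - Kc x)$a$l * (\<Sum>j\<le>m. x^j * coeff (\<beta>$l$c) j)
          + (mat 1::complex^3^3)$a$l * (\<Sum>j\<le>m. of_nat j * x^(j-1) * coeff (\<beta>$l$c) j))"
        by (simp add: sum_distrib_left sum.distrib[symmetric] algebra_simps)
    qed
    also have "\<dots> = (\<Sum>l\<in>UNIV. exp (x*z) * ((mat z - Kc x)$a$l * poly (\<beta>$l$c) x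
          + (mat 1::complex^3^3)$a$l * poly (pderiv (\<beta>$l$c)) x))"
      using deg by (simp add: sum_coeff_poly sum_coeff_pderiv[simplified])
    also have "\<dots> = smat (exp (x*z)) ((mat z - Kc x) ** mpoly_eval \<beta> x + mpoly_eval (mderiv \<beta>) x) $ a $ c"
      using exhaust_3[of a] by (elim disjE) (simp_all add: smat_def matrix_matrix_mult_def mpoly_eval_def mderiv_def sum_3 mat_def algebra_simps)
    finally show ?thesis .
  qed
  thus ?thesis by (simp add: vec_eq_iff)
qed

lemma smat_mult_right: "A ** smat c B = smat c (A ** B)"
  by (simp add: smat_def vec_eq_iff matrix_matrix_mult_def sum_distrib_left algebra_simps)

lemma smat_inj: "c \<noteq> 0 \<Longrightarrow> smat c A = smat c B \<longleftrightarrow> A = B"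
  by (auto simp: smat_def vec_eq_iff)

lemma A_set_intro:
  assumes "\<forall>z. \<exists>\<beta>. (\<forall>a c. degree (\<beta>$a$c) \<le> m) \<and>
     (\<forall>x. x \<noteq> 0 \<longrightarrow> (mat z - Kc x) ** mpoly_eval \<beta> x + mpoly_eval (mderiv \<beta>) x = mpoly_eval \<theta> x ** (mat z - Kc x))"
  shows "\<theta> \<in> A_set"
proof -
  obtain B where B: "\<And>z. (\<forall>a c. degree (B z $a$c) \<le> m) \<and>
     (\<forall>x. x \<noteq> 0 \<longrightarrow> (mat z - Kc x) ** mpoly_eval (B z) x + mpoly_eval (mderiv (B z)) x = mpoly_eval \<theta> x ** (mat z - Kc x))"
    using assms by metis
  show ?thesis unfolding A_set_def
  proof (intro CollectI exI allI impI)
    fix x z :: complex assume "x \<noteq> 0"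
    show "(\<Sum>j\<le>m. dpsi j x z ** (\<lambda>j z. cmat (B z) j) j z) = mpoly_eval \<theta> x ** psi x z"
      using B[of z] \<open>x \<noteq> 0\<close> by (simp add: dpsi_sum psi_eq smat_mult_right)
  qed
qed

lemma A_set_elim:
  assumes "\<theta> \<in> A_set"
  shows "\<exists>\<beta>. \<forall>x. x \<noteq> 0 \<longrightarrow> (mat 0 - Kc x) ** mpoly_eval \<beta> x + mpoly_eval (mderiv \<beta>) x = mpoly_eval \<theta> x ** (mat 0 - Kc x)"
proof -
  obtain b m where bm: "\<forall>x z. x \<noteq> 0 \<longrightarrow> (\<Sum>j\<le>m. dpsi j x z ** b j z) = mpoly_eval \<theta> x ** psi x z"
    using assms unfolding A_set_def by blast
  define \<beta> where "\<beta> = (\<chi> a c. \<Sum>j\<le>m. monom (b j 0 $ a $ c) j)"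
  have deg: "\<forall>a c. degree (\<beta>$a$c) \<le> m"
    unfolding \<beta>_def by (auto intro!: degree_sum_le order.trans[OF degree_monom_le])
  have cm: "cmat \<beta> j = b j 0" if "j \<le> m" for j
    using that by (simp add: cmat_def \<beta>_def vec_eq_iff coeff_sum)
  show ?thesis
  proof (intro exI allI impI)
    fix x :: complex assume x: "x \<noteq> 0"
    have "(\<Sum>j\<le>m. dpsi j x 0 ** cmat \<beta> j) = (\<Sum>j\<le>m. dpsi j x 0 ** b j 0)"
      using cm by (intro sum.cong) auto
    also have "\<dots> = mpoly_eval \<theta> x ** psi x 0" using bm x by blast
    finally show "(mat 0 - Kc x) ** mpoly_eval \<beta> x + mpoly_eval (mderiv \<beta>) x = mpoly_eval \<theta> x ** (mat 0 - Kc x)"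
      using dpsi_sum[OF deg, of x 0] by (simp add: psi_eq smat_mult_right smat_inj)
  qed
qed


lemma ode_solve:
  fixes z :: complex
  assumes "z \<noteq> 0"
  shows "\<exists>g. smult z g + pderiv g = h \<and> degree g \<le> degree h"
proof -
  have "\<forall>h::complex poly. degree h \<le> n \<longrightarrow> (\<exists>g. smult z g + pderiv g = h \<and> degree g \<le> degree h)" for n
  proof (induction n)
    case 0
    show ?case
    proof (intro allI impI)
      fix h :: "complex poly" assume "degree h \<le> 0"
      hence "pderiv h = 0" using pderiv_eq_0_iff by auto
      thus "\<exists>g. smult z g + pderiv g = h \<and> degree g \<le> degree h"
        using assms by (intro exI[of _ "smult (1/z) h"]) (simp add: pderiv_smult)
    qed
  next
    case (Suc n)
    show ?case
    proof (intro allI impI)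
      fix h :: "complex poly" assume h: "degree h \<le> Suc n"
      have "degree (pderiv h) \<le> n" using h by (simp add: degree_pderiv)
      then obtain g1 where g1: "smult z g1 + pderiv g1 = pderiv h" "degree g1 \<le> degree (pderiv h)"
        using Suc.IH by blast
      define g where "g = smult (1/z) (h - g1)"
      have "smult z g + pderiv g = h"
      proof -
        have "pderiv g = smult (1/z) (pderiv h - pderiv g1)" by (simp add: g_def pderiv_smult pderiv_diff)
        also have "pderiv h - pderiv g1 = smult z g1" using g1(1) by (simp add: algebra_simps)
        finally show ?thesis using assms by (simp add: g_def smult_diff_right)
      qed
      moreover have "degree g \<le> degree h"
        unfolding g_def using g1(2) degree_pderiv[of h]
        by (intro order.trans[OF degree_smult_le] degree_diff_le) auto
      ultimately show "\<exists>g. smult z g + pderiv g = h \<and> degree g \<le> degree h" by blast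
    qed
  qed
  thus ?thesis by blast
qed

lemma pderiv_sum: "pderiv (sum f A) = (\<Sum>k\<in>A. pderiv (f k))"
  by (induction A rule: infinite_finite_induct) (auto simp: pderiv_add)

lemma antideriv:
  fixes q :: "complex poly"
  shows "\<exists>g. pderiv g = q \<and> degree g \<le> degree q + 1"
proof -
  define g where "g = (\<Sum>k\<le>degree q. monom (coeff q k / of_nat (Suc k)) (Suc k))"
  have "pderiv g = (\<Sum>k\<le>degree q. monom (coeff q k) k)"
    unfolding g_def by (simp add: pderiv_sum pderiv_monom del: of_nat_Suc)
  also have "\<dots> = q" by (rule poly_as_sum_of_monoms)
  finally have "pderiv g = q" .
  moreover have "degree g \<le> degree q + 1"
    unfolding g_def by (intro degree_sum_le) (auto intro: order.trans[OF degree_monom_le])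
  ultimately show ?thesis by blast
qed

definition mdeg :: "complex poly^3^3 \<Rightarrow> nat" where
  "mdeg M = (\<Sum>i\<in>UNIV. \<Sum>j\<in>UNIV. degree (M$i$j))"

lemma mdeg_le: "degree (M$i$j) \<le> mdeg M"
proof -
  have "degree (M$i$j) \<le> (\<Sum>j\<in>UNIV. degree (M$i$j))"
    by (rule member_le_sum) auto
  also have "\<dots> \<le> mdeg M" unfolding mdeg_def
    by (rule member_le_sum[where f = "\<lambda>i. \<Sum>j\<in>UNIV. degree (M$i$j)"]) auto
  finally show ?thesis .
qed

lemma degree_mmult:
  assumes "\<And>i j. degree (A$i$j) \<le> a" "\<And>i j. degree (B$i$j) \<le> b"
  shows "degree ((A ** B)$i$j) \<le> a + b"
  unfolding matrix_matrix_mult_def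
  by (simp, intro degree_sum_le) (auto intro!: order.trans[OF degree_mult_le] add_mono assms)

lemma degree_Tm: "degree (Tm$i$j) \<le> 1"
  using exhaust_3[of i] exhaust_3[of j] by (auto simp: Tm_def Xp_def)
lemma degree_Um: "degree (Um$i$j) \<le> 1"
  using exhaust_3[of i] exhaust_3[of j] by (auto simp: Um_def Xp_def)
lemma degree_Cm: "degree (Cm c0 c1 c2$i$j) \<le> 0"
  using exhaust_3[of i] exhaust_3[of j] by (auto simp: Cm_def)

definition mscal :: "complex \<Rightarrow> complex poly^3^3 \<Rightarrow> complex poly^3^3" where
  "mscal z M = (\<chi> i j. smult z (M$i$j))"

lemma G_exists:
  fixes Q :: "complex poly^3^3" and z :: complex
  shows "\<exists>G. (\<forall>i j. degree (G$i$j) \<le> mdeg Q + 1) \<and>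
     (\<forall>x. smat z (mpoly_eval G x) + mpoly_eval (mderiv G) x = smat z (mpoly_eval Q x ** mpoly_eval Tm x) - mpoly_eval Q x)"
proof (cases "z = 0")
  case True
  have "\<forall>i j. \<exists>g. pderiv g = - Q$i$j \<and> degree g \<le> degree (- Q$i$j) + 1"
    using antideriv by blast
  then obtain gf where gf: "\<And>i j. pderiv (gf i j) = - Q$i$j \<and> degree (gf i j) \<le> degree (- Q$i$j) + 1"
    by metis
  define G where "G = (\<chi> i j. gf i j)"
  show ?thesis
  proof (intro exI conjI allI)
    fix i j show "degree (G$i$j) \<le> mdeg Q + 1"
      using gf[of i j] mdeg_le[of Q i j] by (simp add: G_def)
  next
    fix x show "smat z (mpoly_eval G x) + mpoly_eval (mderiv G) x = smat z (mpoly_eval Q x ** mpoly_eval Tm x) - mpoly_eval Q x"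
      using True gf by (simp add: smat_def G_def mderiv_def mpoly_eval_def vec_eq_iff)
  qed
next
  case False
  define H where "H = mscal z (Q ** Tm) - Q"
  have degH: "degree (H$i$j) \<le> mdeg Q + 1" for i j
  proof -
    have "degree ((Q ** Tm)$i$j) \<le> mdeg Q + 1"
      by (rule degree_mmult, rule mdeg_le, rule degree_Tm)
    moreover have "degree (Q$i$j) \<le> mdeg Q + 1" using mdeg_le[of Q i j] by simp
    ultimately show ?thesis unfolding H_def mscal_def
      by (simp, intro degree_diff_le) (auto intro: order.trans[OF degree_smult_le])
  qed
  have "\<forall>i j. \<exists>g. smult z g + pderiv g = H$i$j \<and> degree g \<le> degree (H$i$j)"
    using ode_solve[OF False] by blast
  then obtain gf where gf: "\<And>i j. smult z (gf i j) + pderiv (gf i j) = H$i$j \<and> degree (gf i j) \<le> degree (H$i$j)"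
    by metis
  define G where "G = (\<chi> i j. gf i j)"
  show ?thesis
  proof (intro exI conjI allI)
    fix i j show "degree (G$i$j) \<le> mdeg Q + 1"
      using gf[of i j] degH[of i j] by (simp add: G_def)
  next
    fix x
    have "poly (smult z (gf i j) + pderiv (gf i j)) x = poly (H$i$j) x" for i j using gf[of i j] by simp
    hence "z * poly (gf i j) x + poly (pderiv (gf i j)) x = z * (mpoly_eval Q x ** mpoly_eval Tm x)$i$j - poly (Q$i$j) x" for i j
      by (simp add: H_def mscal_def mpoly_eval_mult[symmetric]) (simp add: mpoly_eval_def)
    thus "smat z (mpoly_eval G x) + mpoly_eval (mderiv G) x = smat z (mpoly_eval Q x ** mpoly_eval Tm x) - mpoly_eval Q x"
      by (simp add: smat_def G_def mderiv_def mpoly_eval_def vec_eq_iff)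
  qed
qed

lemma W_alg:
  assumes x: "x \<noteq> 0"
  shows "(mat z - Kc x) ** (mat3 c0 c1 c2 0 c0 c1 0 0 c0 + mat3 0 1 x 1 x 0 x 0 0 ** mat3 g11 g12 g13 g21 g22 g23 g31 g32 g33)
     + (Kc x ** mat3 0 1 x 1 x 0 x 0 0) ** mat3 g11 g12 g13 g21 g22 g23 g31 g32 g33
     + mat3 0 1 x 1 x 0 x 0 0 ** (smat z (mat3 q11 q12 q13 q21 q22 q23 q31 q32 q33 ** mat3 x 1 0 0 x 1 0 0 x)
          - mat3 q11 q12 q13 q21 q22 q23 q31 q32 q33 - smat z (mat3 g11 g12 g13 g21 g22 g23 g31 g32 g33))
   = (mat3 c0 c1 c2 0 c0 c1 0 0 c0 + mat3 0 1 x 1 x 0 x 0 0 ** mat3 q11 q12 q13 q21 q22 q23 q31 q32 q33 ** mat3 x 1 0 0 x 1 0 0 x) ** (mat z - Kc x)"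
  using x
  by (simp add: Kc_def mat3_mat smat_mat3 mat3_mult mat3_add mat3_diff mat3_eq_iff field_simps power2_eq_square power3_eq_cube)

lemma W_pointwise:
  assumes x: "x \<noteq> 0"
    and hG: "smat z (mpoly_eval G x) + mpoly_eval (mderiv G) x = smat z (mpoly_eval Q x ** mpoly_eval Tm x) - mpoly_eval Q x"
  shows "(mat z - Kc x) ** mpoly_eval (Cm c0 c1 c2 + Um ** G) x + mpoly_eval (mderiv (Cm c0 c1 c2 + Um ** G)) x =
         mpoly_eval (Cm c0 c1 c2 + Um ** Q ** Tm) x ** (mat z - Kc x)"
proof -
  define g where "g = mpoly_eval G x"
  define g' where "g' = mpoly_eval (mderiv G) x"
  define q where "q = mpoly_eval Q x"
  have h: "g' = smat z (q ** mpoly_eval Tm x) - q - smat z g"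
    using hG unfolding g_def g'_def q_def by (simp add: algebra_simps)
  have "(mat z - Kc x) ** mpoly_eval (Cm c0 c1 c2 + Um ** G) x + mpoly_eval (mderiv (Cm c0 c1 c2 + Um ** G)) x
     = (mat z - Kc x) ** (mpoly_eval (Cm c0 c1 c2) x + mpoly_eval Um x ** g) + (Kc x ** mpoly_eval Um x) ** g + mpoly_eval Um x ** g'"
    by (simp add: mderiv_add mderiv_mult mderiv_Cm mpoly_eval_add mpoly_eval_mult KU[OF x] g_def g'_def)
  also have "\<dots> = mpoly_eval (Cm c0 c1 c2 + Um ** Q ** Tm) x ** (mat z - Kc x)"
    unfolding h mpoly_eval_add mpoly_eval_mult eval_Cm eval_Um eval_Tm q_def[symmetric]
    using W_alg[OF x, of z c0 c1 c2 "g$1$1" "g$1$2" "g$1$3" "g$2$1" "g$2$2" "g$2$3" "g$3$1" "g$3$2" "g$3$3"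
       "q$1$1" "q$1$2" "q$1$3" "q$2$1" "q$2$2" "q$2$3" "q$3$1" "q$3$2" "q$3$3"]
    by (simp only: mat3_eta[symmetric])
  finally show ?thesis .
qed

lemma W_sub_A: "Wset \<subseteq> A_set"
proof
  fix \<theta> assume "\<theta> \<in> Wset"
  then obtain c0 c1 c2 Q where th: "\<theta> = Cm c0 c1 c2 + Um ** Q ** Tm" unfolding Wset_def by blast
  show "\<theta> \<in> A_set"
  proof (rule A_set_intro[where m = "mdeg Q + 2"], intro allI)
    fix z
    obtain G where G: "\<forall>i j. degree (G$i$j) \<le> mdeg Q + 1"
      "\<forall>x. smat z (mpoly_eval G x) + mpoly_eval (mderiv G) x = smat z (mpoly_eval Q x ** mpoly_eval Tm x) - mpoly_eval Q x"
      using G_exists by blast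
    have deg: "degree ((Cm c0 c1 c2 + Um ** G)$a$c) \<le> mdeg Q + 2" for a c
    proof -
      have "degree ((Um ** G)$a$c) \<le> 1 + (mdeg Q + 1)"
        by (rule degree_mmult, rule degree_Um, rule G(1)[rule_format])
      moreover have "degree (Cm c0 c1 c2 $a$c) \<le> mdeg Q + 2" using degree_Cm[of c0 c1 c2 a c] by simp
      ultimately show ?thesis by (simp, intro degree_add_le) auto
    qed
    show "\<exists>\<beta>. (\<forall>a c. degree (\<beta>$a$c) \<le> mdeg Q + 2) \<and>
     (\<forall>x. x \<noteq> 0 \<longrightarrow> (mat z - Kc x) ** mpoly_eval \<beta> x + mpoly_eval (mderiv \<beta>) x = mpoly_eval \<theta> x ** (mat z - Kc x))"
      using deg W_pointwise G(2) unfolding th by blast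
  qed
qed


lemma mm_add_r: fixes A B C :: "complex^3^3" shows "(A + B) ** C = A ** C + B ** C"
  by (simp add: vec_eq_iff matrix_matrix_mult_def sum.distrib distrib_right)
lemma mm_diff_r: fixes A B C :: "complex^3^3" shows "(A - B) ** C = A ** C - B ** C"
  by (simp add: vec_eq_iff matrix_matrix_mult_def sum_subtractf algebra_simps)
lemma mm_diff_l: fixes A B C :: "complex^3^3" shows "A ** (B - C) = A ** B - A ** C"
  by (simp add: vec_eq_iff matrix_matrix_mult_def sum_subtractf algebra_simps)
lemma mm_neg_r: fixes A B :: "complex^3^3" shows "A ** (- B) = - (A ** B)"
  unfolding vec_eq_iff matrix_matrix_mult_def by (simp add: sum_negf)
lemma mm_neg_l: fixes A B :: "complex^3^3" shows "(- A) ** B = - (A ** B)"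
  unfolding vec_eq_iff matrix_matrix_mult_def by (simp add: sum_negf)

lemma split3: "(p::complex poly) = [:coeff p 0, coeff p 1, coeff p 2:] + monom 1 3 * poly_shift 3 p"
proof (rule poly_eqI)
  fix n
  show "coeff p n = coeff ([:coeff p 0, coeff p 1, coeff p 2:] + monom 1 3 * poly_shift 3 p) n"
  proof (cases "n < 3")
    case True
    then consider "n = 0" | "n = 1" | "n = 2" by linarith
    then show ?thesis by cases (simp_all add: coeff_monom_mult numeral_2_eq_2 numeral_3_eq_3)
  next
    case False
    then obtain k where "n = k + 3" by (metis add.commute le_Suc_ex not_less)
    then show ?thesis by (simp add: coeff_monom_mult coeff_poly_shift numeral_3_eq_3 numeral_2_eq_2)
  qed
qed

definition X3m :: "complex poly^3^3" where "X3m = mat3 (Xp^3) 0 0 0 (Xp^3) 0 0 0 (Xp^3)"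

lemma X3m_mult: "X3m ** (B::complex poly^3^3) = (\<chi> i j. monom 1 3 * B$i$j)"
proof -
  have "monom 1 3 = Xp^3" by (simp add: Xp_def monom_altdef)
  thus ?thesis
    by (subst (1 2) mat3_eta[of B]) (simp add: X3m_def mat3_mult vec_eq_iff forall_3)
qed

lemma mat3_neg: "- mat3 a11 a12 a13 a21 a22 a23 a31 a32 a33 = mat3 (-a11) (-a12) (-a13) (-a21) (-a22) (-a23) (-a31) (-a32) (-a33)"
  unfolding vec_eq_iff forall_3 by simp

lemma smat_x_mat3: "mat3 (x*a11) (x*a12) (x*a13) (x*a21) (x*a22) (x*a23) (x*a31) (x*a32) (x*a33) =
   smat x (mat3 a11 a12 a13 a21 a22 a23 a31 a32 a33)" by (simp add: smat_mat3)

lemma laurent_vanish: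
  assumes "\<forall>x. x \<noteq> 0 \<longrightarrow> poly (p::complex poly) x = r0 / x^3 + r1 / x^2 + r2 / x"
  shows "r0 = 0 \<and> r1 = 0 \<and> r2 = 0"
proof -
  have "monom 1 3 * p = [:r0, r1, r2:]"
  proof -
    have "\<forall>x. x \<noteq> 0 \<longrightarrow> poly (monom 1 3 * p - [:r0, r1, r2:]) x = 0"
      using assms by (auto simp: poly_monom field_simps power2_eq_square power3_eq_cube)
    hence "{x. poly (monom 1 3 * p - [:r0, r1, r2:]) x = 0} \<supseteq> UNIV - {0}" by auto
    moreover have "infinite (UNIV - {0::complex})" by (simp add: infinite_UNIV_char_0)
    ultimately have "infinite {x. poly (monom 1 3 * p - [:r0, r1, r2:]) x = 0}"
      using finite_subset by blast
    hence "monom 1 3 * p - [:r0, r1, r2:] = 0" using poly_roots_finite by blast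
    thus ?thesis by simp
  qed
  hence "coeff (monom 1 3 * p) 0 = coeff [:r0, r1, r2:] 0" "coeff (monom 1 3 * p) 1 = coeff [:r0, r1, r2:] 1"
    "coeff (monom 1 3 * p) 2 = coeff [:r0, r1, r2:] 2" by simp_all
  thus ?thesis by (simp add: coeff_monom_mult numeral_2_eq_2)
qed

definition Sc :: "complex^3^3" where "Sc = mat3 0 1 0 0 0 1 0 0 0"
definition Jc :: "complex^3^3" where "Jc = mat3 0 0 1 0 1 0 1 0 0"
definition Tc :: "complex \<Rightarrow> complex^3^3" where "Tc x = mat3 x 1 0 0 x 1 0 0 x"
definition Ucx :: "complex \<Rightarrow> complex^3^3" where "Ucx x = mat3 0 1 x 1 x 0 x 0 0"
definition Dm :: "complex^3^3 \<Rightarrow> complex^3^3 \<Rightarrow> complex^3^3 \<Rightarrow> complex^3^3" where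
  "Dm b0 b1 b2 = b0 - Sc ** b1 + Sc ** Sc ** b2"
definition R0m where "R0m b0 b1 b2 = Sc ** Sc ** b0 ** Sc"
definition R1m where "R1m b0 b1 b2 = Sc ** Sc ** b0 - Sc ** b0 ** Sc + Sc ** Sc ** b1 ** Sc"
definition R2m where "R2m b0 b1 b2 = Dm b0 b1 b2 ** Sc - Sc ** Dm b0 b1 b2"
definition L0m where "L0m b0 b1 b2 = Dm b0 b1 b2 - Sc ** b2 ** Sc"
definition L1m where "L1m b0 b1 b2 = - (Sc ** b2 + b2 ** Sc)"
definition L2m where "L2m b0 b1 b2 = - (b2::complex^3^3)"

lemma laurent_id_gen:
  assumes "x \<noteq> 0"
  shows "(Kc x ** (mat3 a11 a12 a13 a21 a22 a23 a31 a32 a33 + smat x (mat3 b11 b12 b13 b21 b22 b23 b31 b32 b33) + smat (x^2) (mat3 c11 c12 c13 c21 c22 c23 c31 c32 c33)) - (mat3 b11 b12 b13 b21 b22 b23 b31 b32 b33 + smat (2*x) (mat3 c11 c12 c13 c21 c22 c23 c31 c32 c33))) ** Tc x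
   = smat (1/x^3) (R0m (mat3 a11 a12 a13 a21 a22 a23 a31 a32 a33) (mat3 b11 b12 b13 b21 b22 b23 b31 b32 b33) (mat3 c11 c12 c13 c21 c22 c23 c31 c32 c33)) + smat (1/x^2) (R1m (mat3 a11 a12 a13 a21 a22 a23 a31 a32 a33) (mat3 b11 b12 b13 b21 b22 b23 b31 b32 b33) (mat3 c11 c12 c13 c21 c22 c23 c31 c32 c33))
     + smat (1/x) (R2m (mat3 a11 a12 a13 a21 a22 a23 a31 a32 a33) (mat3 b11 b12 b13 b21 b22 b23 b31 b32 b33) (mat3 c11 c12 c13 c21 c22 c23 c31 c32 c33)) + L0m (mat3 a11 a12 a13 a21 a22 a23 a31 a32 a33) (mat3 b11 b12 b13 b21 b22 b23 b31 b32 b33) (mat3 c11 c12 c13 c21 c22 c23 c31 c32 c33) + smat x (L1m (mat3 a11 a12 a13 a21 a22 a23 a31 a32 a33) (mat3 b11 b12 b13 b21 b22 b23 b31 b32 b33) (mat3 c11 c12 c13 c21 c22 c23 c31 c32 c33)) + smat (x^2) (L2m (mat3 a11 a12 a13 a21 a22 a23 a31 a32 a33) (mat3 b11 b12 b13 b21 b22 b23 b31 b32 b33) (mat3 c11 c12 c13 c21 c22 c23 c31 c32 c33))"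
  using assms
  by (simp add: R0m_def R1m_def R2m_def L0m_def L1m_def L2m_def Dm_def Sc_def Tc_def Kc_def smat_mat3 mat3_mult mat3_add mat3_diff
        mat3_neg mat3_eq_iff field_simps power2_eq_square power3_eq_cube)

lemma laurent_id:
  assumes "x \<noteq> 0"
  shows "(Kc x ** (b0 + smat x b1 + smat (x^2) b2) - (b1 + smat (2*x) b2)) ** Tc x
   = smat (1/x^3) (R0m b0 b1 b2) + smat (1/x^2) (R1m b0 b1 b2)
     + smat (1/x) (R2m b0 b1 b2) + L0m b0 b1 b2 + smat x (L1m b0 b1 b2) + smat (x^2) (L2m b0 b1 b2)"
  using laurent_id_gen[OF assms, of "b0$1$1" "b0$1$2" "b0$1$3" "b0$2$1" "b0$2$2" "b0$2$3" "b0$3$1" "b0$3$2" "b0$3$3" "b1$1$1" "b1$1$2" "b1$1$3" "b1$2$1" "b1$2$2" "b1$2$3" "b1$3$1" "b1$3$2" "b1$3$3" "b2$1$1" "b2$1$2" "b2$1$3" "b2$2$1" "b2$2$2" "b2$2$3" "b2$3$1" "b2$3$2" "b2$3$3"]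
  by (simp only: mat3_eta[symmetric])

lemma L_id_gen:
  "L0m b0 b1 (mat3 c11 c12 c13 c21 c22 c23 c31 c32 c33) + smat x (L1m b0 b1 (mat3 c11 c12 c13 c21 c22 c23 c31 c32 c33)) + smat (x^2) (L2m b0 b1 (mat3 c11 c12 c13 c21 c22 c23 c31 c32 c33))
   = Dm b0 b1 (mat3 c11 c12 c13 c21 c22 c23 c31 c32 c33) + Ucx x ** (- (Jc ** (mat3 c11 c12 c13 c21 c22 c23 c31 c32 c33))) ** Tc x"
  by (simp add: L0m_def L1m_def L2m_def Dm_def Sc_def Jc_def Tc_def Ucx_def smat_mat3 mat3_mult mat3_add mat3_diff
        mat3_neg mat3_eq_iff algebra_simps power2_eq_square)

lemma L_id:
  "L0m b0 b1 b2 + smat x (L1m b0 b1 b2) + smat (x^2) (L2m b0 b1 b2)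
   = Dm b0 b1 b2 + Ucx x ** (- (Jc ** b2)) ** Tc x"
  using L_id_gen[of b0 b1 "b2$1$1" "b2$1$2" "b2$1$3" "b2$2$1" "b2$2$2" "b2$2$3" "b2$3$1" "b2$3$2" "b2$3$3" x] by (simp only: mat3_eta[symmetric])

lemma D_comm:
  assumes "R2m b0 b1 b2 = 0"
  shows "Dm b0 b1 b2 = mat3 (Dm b0 b1 b2$1$1) (Dm b0 b1 b2$1$2) (Dm b0 b1 b2$1$3) 0 (Dm b0 b1 b2$1$1) (Dm b0 b1 b2$1$2) 0 0 (Dm b0 b1 b2$1$1)"
proof -
  define D where "D = Dm b0 b1 b2"
  have "D ** Sc - Sc ** D = 0" using assms by (simp add: R2m_def D_def)
  hence "mat3 (D$1$1) (D$1$2) (D$1$3) (D$2$1) (D$2$2) (D$2$3) (D$3$1) (D$3$2) (D$3$3) ** Sc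
     - Sc ** mat3 (D$1$1) (D$1$2) (D$1$3) (D$2$1) (D$2$2) (D$2$3) (D$3$1) (D$3$2) (D$3$3) = 0"
    by (simp only: mat3_eta[symmetric])
  hence "D$2$1 = 0 \<and> D$3$1 = 0 \<and> D$3$2 = 0 \<and> D$2$2 = D$1$1 \<and> D$3$3 = D$1$1 \<and> D$2$3 = D$1$2"
    by (simp add: Sc_def mat3_mult mat3_diff mat3_zero mat3_eq_iff)
  hence "D = mat3 (D$1$1) (D$1$2) (D$1$3) 0 (D$1$1) (D$1$2) 0 0 (D$1$1)"
    by (subst mat3_eta[of D]) simp
  thus ?thesis by (simp add: D_def)
qed


lemma eval_Tm_Tc: "mpoly_eval Tm x = Tc x" by (simp add: eval_Tm Tc_def)
lemma eval_Um_Ucx: "mpoly_eval Um x = Ucx x" by (simp add: eval_Um Ucx_def)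

lemma const_pmat_eval: "mpoly_eval (\<chi> i j. [:(M::complex^3^3)$i$j:]) x = M"
  by (simp add: mpoly_eval_def vec_eq_iff)

lemma mm_smat_l: "smat c (A::complex^3^3) ** B = smat c (A ** B)"
  by (simp add: smat_def vec_eq_iff matrix_matrix_mult_def sum_distrib_left algebra_simps)

lemma A_sub_W: "A_set \<subseteq> Wset"
proof
  fix \<theta> assume "\<theta> \<in> A_set"
  then obtain \<beta> where hb: "\<forall>x. x \<noteq> 0 \<longrightarrow> (mat 0 - Kc x) ** mpoly_eval \<beta> x + mpoly_eval (mderiv \<beta>) x = mpoly_eval \<theta> x ** (mat 0 - Kc x)"
    using A_set_elim by blast
  define b0 where "b0 = cmat \<beta> 0"
  define b1 where "b1 = cmat \<beta> 1"
  define b2 where "b2 = cmat \<beta> 2"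
  define Bhi where "Bhi = (\<chi> i j. poly_shift 3 (\<beta>$i$j))"
  define Blo where "Blo = (\<chi> i j. [:b0$i$j, b1$i$j, b2$i$j:])"
  define Y where "Y = Uadj ** Bhi"
  have beta_split: "\<beta> = Blo + Um ** Y"
  proof -
    have "\<beta>$i$j = (Blo + X3m ** Bhi)$i$j" for i j
      unfolding X3m_mult Blo_def Bhi_def b0_def b1_def b2_def cmat_def
      using split3[of "\<beta>$i$j"] by simp
    hence "\<beta> = Blo + X3m ** Bhi" by (simp add: vec_eq_iff)
    also have "X3m ** Bhi = Um ** Y" by (simp add: Y_def matrix_mul_assoc U_Uadj X3m_def)
    finally show ?thesis .
  qed
  have eBlo: "mpoly_eval Blo x = b0 + smat x b1 + smat (x^2) b2" for x
    by (simp add: Blo_def mpoly_eval_def smat_def vec_eq_iff algebra_simps power2_eq_square)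
  have eBlo': "mpoly_eval (mderiv Blo) x = b1 + smat (2*x) b2" for x
    by (simp add: Blo_def mpoly_eval_def mderiv_def smat_def vec_eq_iff pderiv_pCons algebra_simps)
  define D where "D = Dm b0 b1 b2"
  define Q0 where "Q0 = - (Jc ** b2)"
  define Lp where "Lp = (\<chi> i j. [:L0m b0 b1 b2$i$j, L1m b0 b1 b2$i$j, L2m b0 b1 b2$i$j:])"
  have eLp: "mpoly_eval Lp x = L0m b0 b1 b2 + smat x (L1m b0 b1 b2) + smat (x^2) (L2m b0 b1 b2)" for x
    by (simp add: Lp_def mpoly_eval_def smat_def vec_eq_iff algebra_simps power2_eq_square)
  have key: "mpoly_eval \<theta> x = smat (1/x^3) (R0m b0 b1 b2) + smat (1/x^2) (R1m b0 b1 b2)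
     + smat (1/x) (R2m b0 b1 b2) + mpoly_eval Lp x - Ucx x ** mpoly_eval (mderiv Y) x ** Tc x"
    if x: "x \<noteq> 0" for x
  proof -
    define k where "k = Kc x"
    define u where "u = Ucx x"
    define y where "y = mpoly_eval Y x"
    define y' where "y' = mpoly_eval (mderiv Y) x"
    define blo where "blo = b0 + smat x b1 + smat (x^2) b2"
    define blo' where "blo' = b1 + smat (2*x) b2"
    define t where "t = Tc x"
    define th where "th = mpoly_eval \<theta> x"
    have ku: "k ** u = mpoly_eval (mderiv Um) x" using KU[OF x] by (simp add: k_def u_def eval_Um_Ucx)
    have eb: "mpoly_eval \<beta> x = blo + u ** y"
      by (subst beta_split) (simp add: mpoly_eval_add mpoly_eval_mult eBlo blo_def u_def y_def eval_Um_Ucx)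
    have eb': "mpoly_eval (mderiv \<beta>) x = blo' + (k ** u) ** y + u ** y'"
      by (subst beta_split) (simp add: mderiv_add mderiv_mult mpoly_eval_add mpoly_eval_mult eBlo' blo'_def ku[symmetric]
           u_def[symmetric] y_def[symmetric] y'_def[symmetric] eval_Um_Ucx add.assoc)
    have "mat 0 - k = - k" by simp
    have h1: "- (k ** (blo + u ** y)) + (blo' + (k ** u) ** y + u ** y') = - (th ** k)"
    proof -
      have "(mat 0 - k) ** mpoly_eval \<beta> x + mpoly_eval (mderiv \<beta>) x = th ** (mat 0 - k)"
        using hb x by (simp add: k_def th_def)
      thus ?thesis unfolding eb eb' \<open>mat 0 - k = - k\<close> mm_neg_l mm_neg_r .
    qed
    have h2: "th ** k = k ** blo - blo' - u ** y'"
    proof -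
      have "k ** (blo + u ** y) = k ** blo + (k ** u) ** y" by (simp add: matrix_add_ldistrib matrix_mul_assoc)
      with h1 have "- (k ** blo + (k ** u) ** y) + (blo' + (k ** u) ** y + u ** y') = - (th ** k)" by simp
      thus ?thesis by (simp add: algebra_simps)
    qed
    have "th = (th ** k) ** t" using KT[OF x] by (simp add: k_def t_def eval_Tm_Tc matrix_mul_assoc[symmetric])
    also have "\<dots> = (k ** blo - blo') ** t - u ** y' ** t" by (simp add: h2 mm_diff_r)
    also have "(k ** blo - blo') ** t = smat (1/x^3) (R0m b0 b1 b2) + smat (1/x^2) (R1m b0 b1 b2)
     + smat (1/x) (R2m b0 b1 b2) + L0m b0 b1 b2 + smat x (L1m b0 b1 b2) + smat (x^2) (L2m b0 b1 b2)"
      unfolding k_def blo_def blo'_def t_def by (rule laurent_id[OF x])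
    finally show ?thesis by (simp add: th_def eLp u_def y'_def t_def add.assoc)
  qed
  define P where "P = \<theta> + Um ** mderiv Y ** Tm - Lp"
  have Rz: "R0m b0 b1 b2 = 0 \<and> R1m b0 b1 b2 = 0 \<and> R2m b0 b1 b2 = 0"
  proof -
    have "R0m b0 b1 b2 $ i $ j = 0 \<and> R1m b0 b1 b2 $ i $ j = 0 \<and> R2m b0 b1 b2 $ i $ j = 0" for i j
    proof (rule laurent_vanish[of "P$i$j" "R0m b0 b1 b2 $i$j" "R1m b0 b1 b2 $i$j"])
      show "\<forall>x. x \<noteq> 0 \<longrightarrow> poly (P$i$j) x = R0m b0 b1 b2 $i$j / x^3 + R1m b0 b1 b2 $i$j / x^2 + R2m b0 b1 b2 $i$j / x"
      proof (intro allI impI)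
        fix x :: complex assume x: "x \<noteq> 0"
        have "mpoly_eval P x = smat (1/x^3) (R0m b0 b1 b2) + smat (1/x^2) (R1m b0 b1 b2) + smat (1/x) (R2m b0 b1 b2)"
          unfolding P_def mpoly_eval_diff mpoly_eval_add mpoly_eval_mult key[OF x] eval_Um_Ucx eval_Tm_Tc
          by simp
        hence "mpoly_eval P x $ i $ j = (smat (1/x^3) (R0m b0 b1 b2) + smat (1/x^2) (R1m b0 b1 b2) + smat (1/x) (R2m b0 b1 b2)) $i$j"
          by simp
        thus "poly (P$i$j) x = R0m b0 b1 b2 $i$j / x^3 + R1m b0 b1 b2 $i$j / x^2 + R2m b0 b1 b2 $i$j / x"
          by (simp add: mpoly_eval_def smat_def)
      qed
    qed
    thus ?thesis by (simp add: vec_eq_iff)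
  qed
  hence R2z: "R2m b0 b1 b2 = 0" by simp
  have Dform: "D = mat3 (D$1$1) (D$1$2) (D$1$3) 0 (D$1$1) (D$1$2) 0 0 (D$1$1)"
    unfolding D_def by (rule D_comm[OF R2z])
  define Q where "Q = (\<chi> i j. [:Q0$i$j:]) - mderiv Y"
  have "\<theta> = Cm (D$1$1) (D$1$2) (D$1$3) + Um ** Q ** Tm"
  proof (subst mpoly_eq_iff_nz, intro allI impI)
    fix x :: complex assume x: "x \<noteq> 0"
    have h1: "mpoly_eval \<theta> x = mpoly_eval Lp x - Ucx x ** mpoly_eval (mderiv Y) x ** Tc x"
      using key[OF x] Rz by (simp add: smat_def vec_eq_iff)
    have eL: "mpoly_eval Lp x = D + Ucx x ** Q0 ** Tc x"
      unfolding eLp L_id D_def Q0_def ..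
    have h3: "Ucx x ** Q0 ** Tc x - Ucx x ** mpoly_eval (mderiv Y) x ** Tc x = Ucx x ** mpoly_eval Q x ** Tc x"
      by (simp add: Q_def mpoly_eval_diff const_pmat_eval mm_diff_l mm_diff_r)
    have h4: "D = mpoly_eval (Cm (D$1$1) (D$1$2) (D$1$3)) x"
      unfolding eval_Cm by (rule Dform)
    have "mpoly_eval \<theta> x = D + (Ucx x ** Q0 ** Tc x - Ucx x ** mpoly_eval (mderiv Y) x ** Tc x)"
      unfolding h1 eL by (simp add: algebra_simps)
    also have "\<dots> = mpoly_eval (Cm (D$1$1) (D$1$2) (D$1$3)) x + Ucx x ** mpoly_eval Q x ** Tc x"
      unfolding h3 using h4 by simp
    finally show "mpoly_eval \<theta> x = mpoly_eval (Cm (D$1$1) (D$1$2) (D$1$3) + Um ** Q ** Tm) x"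
      by (simp add: mpoly_eval_add mpoly_eval_mult eval_Um_Ucx eval_Tm_Tc)
  qed
  thus "\<theta> \<in> Wset" unfolding Wset_def by blast
qed


lemma mmp_add_r: fixes A B C :: "'a::semiring_1^3^3" shows "(A + B) ** C = A ** C + B ** C"
  by (simp add: vec_eq_iff matrix_matrix_mult_def sum.distrib distrib_right)

lemma mat_scal_comm: fixes A B :: "'a::comm_semiring_1^3^3" shows "A ** (mat c ** B) = mat c ** (A ** B)"
  by (simp add: vec_eq_iff matrix_matrix_mult_def mat_def if_distrib if_distribR sum.delta sum_distrib_left algebra_simps
      cong: if_cong)

lemma mat_scal_comm2: fixes A :: "'a::comm_semiring_1^3^3" shows "A ** mat c = mat c ** A"
  by (simp add: vec_eq_iff matrix_matrix_mult_def mat_def if_distrib if_distribR sum.delta algebra_simps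
      cong: if_cong)

lemma mat_scal_entry: fixes B :: "'a::comm_semiring_1^3^3" shows "(mat c ** B) $ i $ j = c * B$i$j"
  by (simp add: matrix_matrix_mult_def mat_def if_distrib if_distribR sum.delta cong: if_cong)

lemma mat_mat_mult: fixes B :: "'a::comm_semiring_1^3^3" shows "mat a ** (mat b ** B) = mat (a*b) ** B"
  by (simp add: vec_eq_iff mat_scal_entry algebra_simps)

definition lowp :: "(nat \<Rightarrow> nat \<Rightarrow> nat \<Rightarrow> complex) \<Rightarrow> complex poly^3^3" where
  "lowp r = (\<chi> i j. \<Sum>k<6. monom (gcoef r k $ i $ j) k)"

lemma gamma_split: "gamma_poly r p = lowp r + mat (monom 1 6) ** p"
  by (simp add: gamma_poly_def lowp_def vec_eq_iff mat_scal_entry)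

lemma gamma_add: "gamma_poly r (p + q) = gamma_poly r p + mat (monom 1 6) ** q"
  by (simp add: gamma_split matrix_add_ldistrib algebra_simps)

lemma sum6: "(\<Sum>k<(6::nat). f k) = f 0 + f 1 + f 2 + f 3 + f 4 + (f 5 :: complex)"
  by (simp add: eval_nat_numeral)

lemma eval_lowp: "mpoly_eval (lowp r) x $ i $ j = (\<Sum>k<6. gcoef r k $ i $ j * x^k)"
  unfolding lowp_def mpoly_eval_def by (simp add: poly_sum poly_monom mult.commute)

lemma eval_gamma: "mpoly_eval (gamma_poly r p) x $ i $ j = (\<Sum>k<6. gcoef r k $ i $ j * x^k) + x^6 * poly (p$i$j) x"
  by (simp add: gamma_split mpoly_eval_add eval_lowp) (simp add: mpoly_eval_def mat_scal_entry poly_monom)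

definition Qlow :: "(nat \<Rightarrow> nat \<Rightarrow> nat \<Rightarrow> complex) \<Rightarrow> complex poly^3^3" where
  "Qlow r = mat3 [:(- r 0 1 1 + r 0 2 2), (r 0 1 2 - r 0 2 3 - 2 * r 1 1 1 + r 1 2 2), (r 1 1 2 - r 2 1 1 - r 2 2 2 + r 3 2 1 + r 3 3 2), (- r 1 1 3 + r 2 1 2 + r 2 2 3 - r 3 1 1 - r 3 2 2 - r 3 3 3 + r 4 2 1 + r 4 3 2):]
    [:(- r 0 1 2 + r 0 2 3 + r 1 1 1), (- r 1 1 2 + r 2 1 1 + r 2 2 2 - r 3 2 1), (r 1 1 3 - r 2 1 2 - r 2 2 3 + r 3 1 1 + r 3 2 2 + r 3 3 3 - r 4 2 1), (r 5 3 2):]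
    [:(r 1 2 3 - r 2 2 2 + r 3 2 1), (- r 1 1 3 + r 2 1 2 + r 2 2 3 - r 3 1 1 - r 3 2 2 + r 4 2 1), (r 4 3 3 - r 5 3 2), (r 5 3 3):]
    [:(r 1 1 1), (- r 1 1 2 + r 2 1 1 + r 2 2 2 - r 3 3 2), (r 1 1 3 - r 2 1 2 - r 2 2 3 + r 3 1 1 + r 3 2 2 + r 3 3 3 - r 4 3 2), (r 5 2 1):]
    [:(r 1 1 2 - r 2 1 1), (- r 1 1 3 + r 2 1 2 + r 2 2 3 - r 3 1 1 - r 3 3 3), (r 4 2 2 - r 5 2 1 - r 5 3 2), (r 5 2 2):]
    [:(r 1 1 3 - r 2 1 2 + r 3 1 1), (r 3 2 3 - r 4 2 2 - r 4 3 3 + r 5 2 1 + r 5 3 2), (r 4 2 3 - r 5 2 2 - r 5 3 3), (r 5 2 3):]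
    [:(r 1 1 2 - r 2 2 2 + r 3 3 2), (- r 1 1 3 + r 2 1 2 + r 2 2 3 - r 3 2 2 - r 3 3 3 + r 4 3 2), (r 4 1 1 - r 5 2 1), (r 5 1 1):]
    [:(r 1 1 3 - r 2 2 3 + r 3 3 3), (r 3 1 2 - r 4 1 1 - r 4 2 2 + r 5 2 1 + r 5 3 2), (r 4 1 2 - r 5 1 1 - r 5 2 2), (r 5 1 2):]
    [:(r 2 1 3 - r 3 1 2 - r 3 2 3 + r 4 1 1 + r 4 2 2 + r 4 3 3 - r 5 2 1 - r 5 3 2), (r 3 1 3 - r 4 1 2 - r 4 2 3 + r 5 1 1 + r 5 2 2 + r 5 3 3), (r 4 1 3 - r 5 1 2 - r 5 2 3), (r 5 1 3):]"


lemma sum6_monom: "(\<Sum>k<(6::nat). monom (c k) k) = [:c 0, c 1, c 2, c 3, c 4, c 5:]"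
  by (simp add: eval_nat_numeral monom_Suc monom_0)

lemma lowp_W: "lowp r = Cm (r 0 1 1) (r 0 1 2 - r 1 1 1) (r 0 1 3 - r 1 1 2 + r 2 1 1) + Um ** Qlow r ** Tm"
  unfolding lowp_def vec_eq_iff forall_3
  apply (simp only: vec_lambda_beta sum6_monom)
  apply (simp add: gcoef_def Qlow_def Cm_def Um_def Tm_def mat3_mult mat3_add Xp_def)
  apply (simp_all add: algebra_simps)?
  done

lemma X3_eq: "mat3 (Xp^3) 0 0 0 (Xp^3) 0 0 0 (Xp^3) = mat (Xp^3)"
  by (simp add: mat3_mat)

lemma Gamma_sub_W: "Gamma_set \<subseteq> Wset"
proof
  fix \<theta> assume "\<theta> \<in> Gamma_set"
  then obtain r p where th: "\<theta> = gamma_poly r p" unfolding Gamma_set_def by blast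
  have "Um ** (Uadj ** p ** Nm) ** Tm = mat (monom 1 6) ** p"
  proof -
    have "Um ** (Uadj ** p ** Nm) ** Tm = (Um ** Uadj) ** p ** (Nm ** Tm)"
      by (simp add: matrix_mul_assoc)
    also have "\<dots> = mat (Xp^3) ** p ** mat (Xp^3)" by (simp add: U_Uadj N_T X3_eq)
    also have "\<dots> = mat (Xp^3) ** (mat (Xp^3) ** p)"
      by (simp only: matrix_mul_assoc[symmetric] mat_scal_comm2[of p])
    also have "\<dots> = mat (Xp^3 * Xp^3) ** p" by (rule mat_mat_mult)
    also have "Xp^3 * Xp^3 = (monom 1 6 :: complex poly)" by (simp add: Xp_def monom_altdef flip: power_add)
    finally show ?thesis .
  qed
  hence "\<theta> = Cm (r 0 1 1) (r 0 1 2 - r 1 1 1) (r 0 1 3 - r 1 1 2 + r 2 1 1) + Um ** (Qlow r + Uadj ** p ** Nm) ** Tm"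
    unfolding th gamma_split lowp_W by (simp only: matrix_add_ldistrib mmp_add_r add.assoc)
  thus "\<theta> \<in> Wset" unfolding Wset_def by blast
qed

lemma WG_gen: "Cm c0 c1 c2 + Um ** mat3 [:q11_0, q11_1, q11_2, q11_3, q11_4, q11_5:] [:q12_0, q12_1, q12_2, q12_3, q12_4, q12_5:] [:q13_0, q13_1, q13_2, q13_3, q13_4, q13_5:] [:q21_0, q21_1, q21_2, q21_3, q21_4, q21_5:] [:q22_0, q22_1, q22_2, q22_3, q22_4, q22_5:] [:q23_0, q23_1, q23_2, q23_3, q23_4, q23_5:] [:q31_0, q31_1, q31_2, q31_3, q31_4, q31_5:] [:q32_0, q32_1, q32_2, q32_3, q32_4, q32_5:] [:q33_0, q33_1, q33_2, q33_3, q33_4, q33_5:] ** Tm = gamma_poly (\<lambda>k i j. (if k = 0 then (if i = 1 then (if j = 1 then (c0) else if j = 2 then (c1 + q21_0) else (c2 + q22_0)) else if i = 2 then (if j = 1 then 0 else if j = 2 then (c0 + q11_0) else (c1 + q12_0)) else (if j = 1 then 0 else if j = 2 then 0 else (c0))) else (if k = 1 then (if i = 1 then (if j = 1 then (q21_0) else if j = 2 then (q21_1 + q22_0 + q31_0) else (q22_1 + q23_0 + q32_0)) else if i = 2 then (if j = 1 then (q11_0) else if j = 2 then (q11_1 + q12_0 + q21_0) else (q12_1 + q13_0 + q22_0)) else (if j = 1 then 0 else if j = 2 then (q11_0) else (q12_0))) else (if k = 2 then (if i = 1 then (if j = 1 then (q21_1 + q31_0) else if j = 2 then (q21_2 + q22_1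 + q31_1 + q32_0) else (q22_2 + q23_1 + q32_1 + q33_0)) else if i = 2 then (if j = 1 then (q11_1 + q21_0) else if j = 2 then (q11_2 + q12_1 + q21_1 + q22_0) else (q12_2 + q13_1 + q22_1 + q23_0)) else (if j = 1 then (q11_0) else if j = 2 then (q11_1 + q12_0) else (q12_1 + q13_0))) else (if k = 3 then (if i = 1 then (if j = 1 then (q21_2 + q31_1) else if j = 2 then (q21_3 + q22_2 + q31_2 + q32_1) else (q22_3 + q23_2 + q32_2 + q33_1)) else if i = 2 then (if j = 1 then (q11_2 + q21_1) else if j = 2 then (q11_3 + q12_2 + q21_2 + q22_1) else (q12_3 + q13_2 + q22_2 + q23_1)) else (if j = 1 then (q11_1) else if j = 2 then (q11_2 + q12_1) else (q12_2 + q13_1))) else (if k = 4 then (if i = 1 then (if j = 1 then (q21_3 + q31_2) else if j = 2 then (q21_4 + q22_3 + q31_3 + q32_2) else (q22_4 + q23_3 + q32_3 + q33_2)) else if i = 2 then (if j = 1 then (q11_3 + q21_2) else if j = 2 then (q11_4 + q12_3 + q21_3 + q22_2) else (q12_4 + q13_3 + q22_3 + q23_2)) else (if j = 1 then (q11_2) else if j = 2 then (q11_3 + q12_2) else (q12_3 + q13_2))) else (if i = 1 then (if j = 1 then (q21_4 + q31_3) else if j = 2 then (q21_5 + q22_4 + q31_4 + q32_3) else (q22_5 + q23_4 + q32_4 + q33_3)) else if i = 2 then (if j = 1 then (q11_4 + q21_3) else if j = 2 then (q11_5 + q12_4 + q21_4 + q22_3) else (q12_5 + q13_4 + q22_4 +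 q23_3)) else (if j = 1 then (q11_3) else if j = 2 then (q11_4 + q12_3) else (q12_4 + q13_3))))))))) (mat3 [:(q21_5 + q31_4), (q31_5):] [:(q22_5 + q31_5 + q32_4), (q32_5):] [:(q23_5 + q32_5 + q33_4), (q33_5):] [:(q11_5 + q21_4), (q21_5):] [:(q12_5 + q21_5 + q22_4), (q22_5):] [:(q13_5 + q22_5 + q23_4), (q23_5):] [:(q11_4), (q11_5):] [:(q11_5 + q12_4), (q12_5):] [:(q12_5 + q13_4), (q13_5):])"
  unfolding gamma_poly_def vec_eq_iff forall_3
  apply (simp only: vec_lambda_beta sum6_monom)
  apply (simp add: gcoef_def Cm_def Um_def Tm_def mat3_mult mat3_add Xp_def eval_nat_numeral monom_Suc monom_0)
  apply (simp_all add: algebra_simps)?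
  done

lemma split6: "(p::complex poly) = [:coeff p 0, coeff p 1, coeff p 2, coeff p 3, coeff p 4, coeff p 5:] + monom 1 6 * poly_shift 6 p"
proof (rule poly_eqI)
  fix n
  show "coeff p n = coeff ([:coeff p 0, coeff p 1, coeff p 2, coeff p 3, coeff p 4, coeff p 5:] + monom 1 6 * poly_shift 6 p) n"
  proof (cases "n < 6")
    case True
    then consider "n = 0" | "n = 1" | "n = 2" | "n = 3" | "n = 4" | "n = 5" by linarith
    then show ?thesis by cases (simp_all add: coeff_monom_mult eval_nat_numeral)
  next
    case False
    then obtain k where "n = k + 6" by (metis add.commute le_Suc_ex not_less)
    then show ?thesis by (simp add: coeff_monom_mult coeff_poly_shift eval_nat_numeral)
  qed
qed

lemma W_sub_Gamma: "Wset \<subseteq> Gamma_set"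
proof
  fix \<theta> assume "\<theta> \<in> Wset"
  then obtain c0 c1 c2 Q where th: "\<theta> = Cm c0 c1 c2 + Um ** Q ** Tm" unfolding Wset_def by blast
  define Qlo where "Qlo = (\<chi> i j. [:coeff (Q$i$j) 0, coeff (Q$i$j) 1, coeff (Q$i$j) 2, coeff (Q$i$j) 3, coeff (Q$i$j) 4, coeff (Q$i$j) 5:])"
  define Qhi where "Qhi = (\<chi> i j. poly_shift 6 (Q$i$j))"
  have "Q$i$j = (Qlo + mat (monom 1 6) ** Qhi)$i$j" for i j
    unfolding Qlo_def Qhi_def using split6[of "Q$i$j"] by (simp add: mat_scal_entry)
  hence Qs: "Q = Qlo + mat (monom 1 6) ** Qhi" by (simp add: vec_eq_iff)
  have Qlo_eq: "Qlo = mat3 [:coeff (Q$1$1) 0, coeff (Q$1$1) 1, coeff (Q$1$1) 2, coeff (Q$1$1) 3, coeff (Q$1$1) 4, coeff (Q$1$1) 5:] [:coeff (Q$1$2) 0, coeff (Q$1$2) 1, coeff (Q$1$2) 2, coeff (Q$1$2) 3, coeff (Q$1$2) 4, coeff (Q$1$2) 5:] [:coeff (Q$1$3) 0, coeff (Q$1$3) 1, coeff (Q$1$3) 2, coeff (Q$1$3) 3, coeff (Q$1$3) 4, coeff (Q$1$3) 5:] [:coeff (Q$2$1) 0, coeff (Q$2$1) 1, coeff (Q$2$1) 2, coeff (Q$2$1) 3, coeff (Q$2$1) 4, coeff (Q$2$1) 5:] [:coeff (Q$2$2) 0, coeff (Q$2$2) 1, coeff (Q$2$2) 2, coeff (Q$2$2)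 3, coeff (Q$2$2) 4, coeff (Q$2$2) 5:] [:coeff (Q$2$3) 0, coeff (Q$2$3) 1, coeff (Q$2$3) 2, coeff (Q$2$3) 3, coeff (Q$2$3) 4, coeff (Q$2$3) 5:] [:coeff (Q$3$1) 0, coeff (Q$3$1) 1, coeff (Q$3$1) 2, coeff (Q$3$1) 3, coeff (Q$3$1) 4, coeff (Q$3$1) 5:] [:coeff (Q$3$2) 0, coeff (Q$3$2) 1, coeff (Q$3$2) 2, coeff (Q$3$2) 3, coeff (Q$3$2) 4, coeff (Q$3$2) 5:] [:coeff (Q$3$3) 0, coeff (Q$3$3) 1, coeff (Q$3$3) 2, coeff (Q$3$3) 3, coeff (Q$3$3) 4, coeff (Q$3$3) 5:]"
    unfolding Qlo_def by (simp add: vec_eq_iff forall_3)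
  have "\<exists>R P. Cm c0 c1 c2 + Um ** Qlo ** Tm = gamma_poly R P"
    unfolding Qlo_eq by (rule exI, rule exI, rule WG_gen)
  then obtain R P where RP: "Cm c0 c1 c2 + Um ** Qlo ** Tm = gamma_poly R P" by blast
  have "\<theta> = Cm c0 c1 c2 + Um ** Qlo ** Tm + mat (monom 1 6) ** (Um ** Qhi ** Tm)"
  proof -
    have "Um ** (mat (monom 1 6) ** Qhi) ** Tm = mat (monom 1 6) ** (Um ** Qhi ** Tm)"
      by (simp only: mat_scal_comm matrix_mul_assoc[symmetric])
    thus ?thesis unfolding th Qs by (simp only: matrix_add_ldistrib mmp_add_r add.assoc)
  qed
  also have "\<dots> = gamma_poly R (P + Um ** Qhi ** Tm)" by (simp add: RP gamma_add)
  finally show "\<theta> \<in> Gamma_set" unfolding Gamma_set_def by blast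
qed

lemma Gamma_eq_W: "Gamma_set = Wset"
  using Gamma_sub_W W_sub_Gamma by blast


definition Sp :: "complex poly^3^3" where "Sp = mat3 0 1 0 0 0 1 0 0 0"
definition Ep :: "complex poly^3^3" where "Ep = mat3 0 0 0 Xp 1 0 (Xp^2) Xp 0"

abbreviation wv where "wv \<equiv> word_val Sp Ep"
abbreviation ev where "ev \<equiv> nc_eval Sp Ep"

definition supp :: "ncpoly \<Rightarrow> gen list set" where "supp f = {w. f w \<noteq> 0}"

lemma word_val_Nil[simp]: "word_val a b [] = mat 1" by (simp add: word_val_def)
lemma word_val_Cons[simp]: "word_val a b (l # w) = gen_val a b l ** word_val a b w" by (simp add: word_val_def)
lemma word_val_append: "word_val a b (u @ v) = word_val a b u ** word_val a b v"
  by (induction u) (simp_all add: matrix_mul_assoc)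

lemma msmult_0[simp]: "msmult 0 M = 0" by (simp add: msmult_def vec_eq_iff)
lemma msmult_1[simp]: "msmult 1 M = M" by (simp add: msmult_def vec_eq_iff)
lemma msmult_zero[simp]: "msmult c 0 = 0" by (simp add: msmult_def vec_eq_iff)
lemma msmult_add_l: "msmult (a + b) M = msmult a M + msmult b M" by (simp add: msmult_def vec_eq_iff smult_add_left)
lemma msmult_add_r: "msmult c (A + B) = msmult c A + msmult c B" by (simp add: msmult_def vec_eq_iff smult_add_right)
lemma msmult_msmult: "msmult a (msmult b M) = msmult (a * b) M" by (simp add: msmult_def vec_eq_iff)
lemma smult_sum_r: "smult c (\<Sum>k\<in>K. f k) = (\<Sum>k\<in>K. smult c (f k))"
  by (induction K rule: infinite_finite_induct) (simp_all add: smult_add_right)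
lemma msmult_mult_l: "msmult c A ** B = msmult c (A ** B)"
  by (simp add: msmult_def vec_eq_iff matrix_matrix_mult_def smult_sum_r mult_smult_left mult_smult_right)
lemma msmult_mult_r: "A ** msmult c B = msmult c (A ** B)"
  by (simp add: msmult_def vec_eq_iff matrix_matrix_mult_def smult_sum_r mult_smult_left mult_smult_right)
lemma msmult_sum_l: "msmult (\<Sum>k\<in>K. c k) M = (\<Sum>k\<in>K. msmult (c k) M)"
  by (induction K rule: infinite_finite_induct) (simp_all add: msmult_add_l)
lemma msmult_sum_r: "msmult c (\<Sum>k\<in>K. M k) = (\<Sum>k\<in>K. msmult c (M k))"
  by (induction K rule: infinite_finite_induct) (simp_all add: msmult_add_r)
lemma mmult_sum_l: fixes B :: "complex poly^3^3" shows "(\<Sum>k\<in>K. M k) ** B = (\<Sum>k\<in>K. M k ** B)"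
  by (induction K rule: infinite_finite_induct) (simp_all add: vec_eq_iff matrix_matrix_mult_def sum.distrib distrib_right)
lemma mmult_sum_r: fixes A :: "complex poly^3^3" shows "A ** (\<Sum>k\<in>K. M k) = (\<Sum>k\<in>K. A ** M k)"
  by (induction K rule: infinite_finite_induct) (simp_all add: matrix_add_ldistrib)

lemma nc_eval_superset:
  assumes "finite F" "supp f \<subseteq> F"
  shows "nc_eval a b f = (\<Sum>w\<in>F. msmult (f w) (word_val a b w))"
  unfolding nc_eval_def
  using assms by (intro sum.mono_neutral_left) (auto simp: supp_def)

lemma nc_fin_supp: "nc_fin f \<longleftrightarrow> finite (supp f)" by (simp add: nc_fin_def supp_def)

lemma nc_fin_add: "nc_fin f \<Longrightarrow> nc_fin g \<Longrightarrow> nc_fin (\<lambda>w. f w + g w)"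
  unfolding nc_fin_def by (rule finite_subset[of _ "{w. f w \<noteq> 0} \<union> {w. g w \<noteq> 0}"]) auto
lemma nc_fin_scale: "nc_fin f \<Longrightarrow> nc_fin (\<lambda>w. c * f w)"
  unfolding nc_fin_def by (rule finite_subset[of _ "{w. f w \<noteq> 0}"]) auto
lemma nc_fin_mon: "nc_fin (nc_mon u)" unfolding nc_fin_def nc_mon_def by simp
lemma nc_fin_zero: "nc_fin (\<lambda>w. 0)" unfolding nc_fin_def by simp
lemma nc_fin_diff: "nc_fin f \<Longrightarrow> nc_fin g \<Longrightarrow> nc_fin (\<lambda>w. f w - g w)"
  unfolding nc_fin_def by (rule finite_subset[of _ "{w. f w \<noteq> 0} \<union> {w. g w \<noteq> 0}"]) auto
lemma nc_fin_sum: "finite K \<Longrightarrow> (\<And>k. k \<in> K \<Longrightarrow> nc_fin (h k)) \<Longrightarrow> nc_fin (\<lambda>w. \<Sum>k\<in>K. h k w)"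
proof (induction K rule: finite_induct)
  case empty then show ?case by (simp add: nc_fin_zero)
next
  case (insert k K) then show ?case by (simp add: nc_fin_add)
qed

lemma nc_eval_add: "nc_fin f \<Longrightarrow> nc_fin g \<Longrightarrow> nc_eval a b (\<lambda>w. f w + g w) = nc_eval a b f + nc_eval a b g"
proof -
  assume f: "nc_fin f" and g: "nc_fin g"
  let ?F = "supp f \<union> supp g"
  have fin: "finite ?F" using f g by (simp add: nc_fin_supp)
  have "nc_eval a b (\<lambda>w. f w + g w) = (\<Sum>w\<in>?F. msmult (f w + g w) (word_val a b w))"
    by (rule nc_eval_superset[OF fin]) (auto simp: supp_def)
  also have "\<dots> = (\<Sum>w\<in>?F. msmult (f w) (word_val a b w)) + (\<Sum>w\<in>?F. msmult (g w) (word_val a b w))"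
    by (simp add: msmult_add_l sum.distrib)
  also have "\<dots> = nc_eval a b f + nc_eval a b g"
    by (simp add: nc_eval_superset[OF fin])
  finally show ?thesis .
qed

lemma nc_eval_scale: "nc_fin f \<Longrightarrow> nc_eval a b (\<lambda>w. c * f w) = msmult c (nc_eval a b f)"
proof -
  assume f: "nc_fin f"
  have fin: "finite (supp f)" using f by (simp add: nc_fin_supp)
  have "nc_eval a b (\<lambda>w. c * f w) = (\<Sum>w\<in>supp f. msmult (c * f w) (word_val a b w))"
    by (rule nc_eval_superset[OF fin]) (auto simp: supp_def)
  also have "\<dots> = msmult c (nc_eval a b f)"
    by (simp add: nc_eval_superset[OF fin] msmult_sum_r msmult_msmult)
  finally show ?thesis .
qed

lemma nc_eval_zero[simp]: "nc_eval a b (\<lambda>w. 0) = 0" by (simp add: nc_eval_def)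

lemma nc_eval_diff: "nc_fin f \<Longrightarrow> nc_fin g \<Longrightarrow> nc_eval a b (\<lambda>w. f w - g w) = nc_eval a b f - nc_eval a b g"
proof -
  assume f: "nc_fin f" and g: "nc_fin g"
  have e: "(\<lambda>w. f w - g w) = (\<lambda>w. f w + (-1) * g w)" by simp
  have "nc_eval a b (\<lambda>w. f w - g w) = nc_eval a b (\<lambda>w. f w + (-1) * g w)" by (simp only: e)
  also have "\<dots> = nc_eval a b f + msmult (-1) (nc_eval a b g)"
    by (subst nc_eval_add[OF f nc_fin_scale[OF g]], subst nc_eval_scale[OF g], rule refl)
  also have "msmult (-1) M = - M" for M by (simp add: msmult_def vec_eq_iff)
  finally show ?thesis by simp
qed

lemma nc_eval_mon: "nc_eval a b (nc_mon u) = word_val a b u"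
  by (simp add: nc_eval_def nc_mon_def)

lemma nc_eval_sum: "finite K \<Longrightarrow> (\<And>k. k \<in> K \<Longrightarrow> nc_fin (h k)) \<Longrightarrow>
   nc_eval a b (\<lambda>w. \<Sum>k\<in>K. h k w) = (\<Sum>k\<in>K. nc_eval a b (h k))"
proof (induction K rule: finite_induct)
  case empty then show ?case by simp
next
  case (insert k K)
  have "nc_eval a b (\<lambda>w. \<Sum>k\<in>insert k K. h k w) = nc_eval a b (\<lambda>w. h k w + (\<Sum>k\<in>K. h k w))"
    using insert by simp
  also have "\<dots> = nc_eval a b (h k) + nc_eval a b (\<lambda>w. \<Sum>k\<in>K. h k w)"
    using insert by (intro nc_eval_add) (auto intro: nc_fin_sum)
  finally show ?case using insert by simp
qed

lemma nc_eval_lincomb: "finite K \<Longrightarrow>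
   nc_eval a b (\<lambda>w. \<Sum>k\<in>K. c k * nc_mon (h k) w) = (\<Sum>k\<in>K. msmult (c k) (word_val a b (h k)))"
  by (subst nc_eval_sum) (auto intro: nc_fin_scale nc_fin_mon simp: nc_eval_scale nc_fin_mon nc_eval_mon)

lemma nc_decomp: "nc_fin f \<Longrightarrow> f = (\<lambda>w. \<Sum>u\<in>supp f. f u * nc_mon u w)"
proof
  fix w assume f: "nc_fin f"
  have fin: "finite (supp f)" using f by (simp add: nc_fin_supp)
  show "f w = (\<Sum>u\<in>supp f. f u * nc_mon u w)"
  proof (cases "w \<in> supp f")
    case True
    then show ?thesis using fin by (simp add: nc_mon_def if_distrib if_distribR sum.delta cong: if_cong)
  next
    case False
    then have "f w = 0" by (simp add: supp_def)
    moreover have "(\<Sum>u\<in>supp f. f u * nc_mon u w) = 0"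
      using False by (intro sum.neutral) (auto simp: nc_mon_def)
    ultimately show ?thesis by simp
  qed
qed

lemma take_drop_iff: "i \<le> length w \<Longrightarrow> (take i w = u \<and> drop i w = v) \<longleftrightarrow> (w = u @ v \<and> i = length u)"
  by (metis append_eq_conv_conj append_take_drop_id length_take min_absorb2)

lemma nc_mult_mon: "nc_mult (nc_mon u) (nc_mon v) = nc_mon (u @ v)"
proof
  fix w
  have "nc_mult (nc_mon u) (nc_mon v) w = (\<Sum>i\<le>length w. if i = length u \<and> w = u @ v then 1 else 0)"
    unfolding nc_mult_def nc_mon_def
    by (intro sum.cong refl) (auto simp: take_drop_iff)
  also have "\<dots> = nc_mon (u @ v) w"
    by (auto simp: nc_mon_def sum.delta)
  finally show "nc_mult (nc_mon u) (nc_mon v) w = nc_mon (u @ v) w" .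
qed

lemma nc_mult_sum_l: "nc_mult (\<lambda>w. \<Sum>k\<in>K. c k * h k w) g = (\<lambda>w. \<Sum>k\<in>K. c k * nc_mult (h k) g w)"
  unfolding nc_mult_def by (auto simp: sum_distrib_left sum_distrib_right algebra_simps intro!: sum.swap)

lemma nc_mult_sum_r: "nc_mult f (\<lambda>w. \<Sum>k\<in>K. c k * h k w) = (\<lambda>w. \<Sum>k\<in>K. c k * nc_mult f (h k) w)"
  unfolding nc_mult_def by (auto simp: sum_distrib_left sum_distrib_right algebra_simps intro!: sum.swap)

lemma nc_mult_expand:
  assumes f: "nc_fin f" and g: "nc_fin g"
  shows "nc_mult f g = (\<lambda>w. \<Sum>p\<in>supp f \<times> supp g. (case p of (u, v) \<Rightarrow> f u * g v) * nc_mon (case p of (u, v) \<Rightarrow> u @ v) w)"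
proof -
  have "nc_mult f g = nc_mult (\<lambda>w. \<Sum>u\<in>supp f. f u * nc_mon u w) (\<lambda>w. \<Sum>v\<in>supp g. g v * nc_mon v w)"
    using nc_decomp[OF f] nc_decomp[OF g] by simp
  also have "\<dots> = (\<lambda>w. \<Sum>u\<in>supp f. f u * (\<Sum>v\<in>supp g. g v * nc_mon (u @ v) w))"
    by (simp add: nc_mult_sum_l nc_mult_sum_r nc_mult_mon)
  also have "\<dots> = (\<lambda>w. \<Sum>u\<in>supp f. \<Sum>v\<in>supp g. (case (u, v) of (u, v) \<Rightarrow> f u * g v) * nc_mon (case (u, v) of (u, v) \<Rightarrow> u @ v) w)"
    by (simp add: sum_distrib_left mult.assoc)
  also have "\<dots> = (\<lambda>w. \<Sum>p\<in>supp f \<times> supp g. (case p of (u, v) \<Rightarrow> f u * g v) * nc_mon (case p of (u, v) \<Rightarrow> u @ v) w)"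
    by (subst sum.cartesian_product) (auto intro!: sum.cong ext split: prod.splits)
  finally show ?thesis .
qed

lemma nc_fin_mult: "nc_fin f \<Longrightarrow> nc_fin g \<Longrightarrow> nc_fin (nc_mult f g)"
proof -
  assume f: "nc_fin f" and g: "nc_fin g"
  have fin: "finite (supp f \<times> supp g)" using f g by (simp add: nc_fin_supp)
  show ?thesis
    unfolding nc_mult_expand[OF f g] by (rule nc_fin_sum[OF fin]) (intro nc_fin_scale nc_fin_mon)
qed

lemma nc_eval_mult:
  assumes f: "nc_fin f" and g: "nc_fin g"
  shows "nc_eval a b (nc_mult f g) = nc_eval a b f ** nc_eval a b g"
proof -
  have ff: "finite (supp f)" and fg: "finite (supp g)" using f g by (simp_all add: nc_fin_supp)
  have "nc_eval a b (nc_mult f g) = (\<Sum>p\<in>supp f \<times> supp g. msmult (case p of (u, v) \<Rightarrow> f u * g v) (word_val a b (case p of (u, v) \<Rightarrow> u @ v)))"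
    unfolding nc_mult_expand[OF f g] by (rule nc_eval_lincomb) (simp add: ff fg)
  also have "\<dots> = (\<Sum>u\<in>supp f. \<Sum>v\<in>supp g. msmult (f u * g v) (word_val a b (u @ v)))"
    by (subst sum.cartesian_product) (auto intro!: sum.cong split: prod.splits)
  also have "\<dots> = (\<Sum>u\<in>supp f. \<Sum>v\<in>supp g. msmult (f u) (word_val a b u) ** msmult (g v) (word_val a b v))"
    by (simp add: word_val_append msmult_mult_l msmult_mult_r msmult_msmult mult.commute)
  also have "\<dots> = nc_eval a b f ** nc_eval a b g"
    by (simp add: nc_eval_superset[OF ff] nc_eval_superset[OF fg] mmult_sum_l mmult_sum_r) (rule sum.swap)
  finally show ?thesis .
qed


definition E11 :: "complex poly^3^3" where "E11 = mat3 1 0 0 0 0 0 0 0 0"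
definition Zm :: "complex poly^3^3" where "Zm = mat3 0 0 0 1 0 0 0 1 0"

lemma Ep_UET: "Ep = Um ** E11 ** Tm"
  by (simp add: Ep_def Um_def E11_def Tm_def mat3_mult power2_eq_square)

lemma Sp_U: "Sp ** Um = Um ** Zm"
  by (simp add: Sp_def Um_def Zm_def mat3_mult)

lemma Sp_Cm: "Sp ** Cm c0 c1 c2 = Cm 0 c0 c1"
  by (simp add: Sp_def Cm_def mat3_mult)

lemma T_Cm: "Tm ** Cm c0 c1 c2 = Cm c0 c1 c2 ** Tm"
  by (simp add: Tm_def Cm_def mat3_mult mat3_eq_iff algebra_simps)

lemma Cm_zero: "Cm 0 0 0 = 0" by (simp add: Cm_def mat3_zero)

lemma Cm_add: "Cm a0 a1 a2 + Cm b0 b1 b2 = Cm (a0+b0) (a1+b1) (a2+b2)"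
  by (simp add: Cm_def mat3_add)

lemma msmult_Cm: "msmult c (Cm a0 a1 a2) = Cm (c*a0) (c*a1) (c*a2)"
  by (simp add: Cm_def msmult_def vec_eq_iff forall_3)

lemma Cm_one: "Cm 1 0 0 = mat 1" by (simp add: Cm_def mat3_one pCons_one)

lemma W_I: "Cm c0 c1 c2 + Um ** Q ** Tm \<in> Wset" unfolding Wset_def by blast

lemma W_add: "A \<in> Wset \<Longrightarrow> B \<in> Wset \<Longrightarrow> A + B \<in> Wset"
proof -
  assume "A \<in> Wset" "B \<in> Wset"
  then obtain a0 a1 a2 QA b0 b1 b2 QB where "A = Cm a0 a1 a2 + Um ** QA ** Tm" "B = Cm b0 b1 b2 + Um ** QB ** Tm"
    unfolding Wset_def by blast
  hence "A + B = Cm (a0+b0) (a1+b1) (a2+b2) + Um ** (QA + QB) ** Tm"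
    by (simp add: Cm_add[symmetric] matrix_add_ldistrib mmp_add_r algebra_simps)
  thus ?thesis by (rule ssubst) (rule W_I)
qed

lemma W_zero: "0 \<in> Wset"
  using W_I[of 0 0 0 0] by (simp add: Cm_zero)

lemma W_sum: "(\<And>k. k \<in> K \<Longrightarrow> M k \<in> Wset) \<Longrightarrow> (\<Sum>k\<in>K. M k) \<in> Wset"
  by (induction K rule: infinite_finite_induct) (auto intro: W_add W_zero)

lemma W_msmult: "A \<in> Wset \<Longrightarrow> msmult c A \<in> Wset"
proof -
  assume "A \<in> Wset"
  then obtain a0 a1 a2 Q where "A = Cm a0 a1 a2 + Um ** Q ** Tm" unfolding Wset_def by blast
  hence "msmult c A = Cm (c*a0) (c*a1) (c*a2) + Um ** msmult c Q ** Tm"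
    by (simp add: msmult_add_r msmult_Cm msmult_mult_l msmult_mult_r)
  thus ?thesis by (rule ssubst) (rule W_I)
qed

lemma W_Sp: "A \<in> Wset \<Longrightarrow> Sp ** A \<in> Wset"
proof -
  assume "A \<in> Wset"
  then obtain a0 a1 a2 Q where "A = Cm a0 a1 a2 + Um ** Q ** Tm" unfolding Wset_def by blast
  hence "Sp ** A = Cm 0 a0 a1 + Um ** (Zm ** Q) ** Tm"
    by (simp add: matrix_add_ldistrib Sp_Cm matrix_mul_assoc Sp_U)
  thus ?thesis by (rule ssubst) (rule W_I)
qed

lemma Ep_Cm: "Ep ** Cm c0 c1 c2 = Um ** (E11 ** Cm c0 c1 c2) ** Tm"
proof -
  have "Ep ** Cm c0 c1 c2 = Um ** E11 ** (Tm ** Cm c0 c1 c2)" by (simp add: Ep_UET matrix_mul_assoc)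
  also have "\<dots> = Um ** (E11 ** Cm c0 c1 c2) ** Tm" by (simp add: T_Cm matrix_mul_assoc)
  finally show ?thesis .
qed

lemma W_Ep: "A \<in> Wset \<Longrightarrow> Ep ** A \<in> Wset"
proof -
  assume "A \<in> Wset"
  then obtain a0 a1 a2 Q where "A = Cm a0 a1 a2 + Um ** Q ** Tm" unfolding Wset_def by blast
  hence "Ep ** A = Cm 0 0 0 + Um ** (E11 ** Cm a0 a1 a2 + E11 ** Tm ** Um ** Q) ** Tm"
    by (simp add: matrix_add_ldistrib mmp_add_r Ep_Cm Cm_zero) (simp add: Ep_UET matrix_mul_assoc)
  thus ?thesis by (rule ssubst) (rule W_I)
qed

lemma W_one: "mat 1 \<in> Wset"
  using W_I[of 1 0 0 0] by (simp add: Cm_one)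

lemma W_word: "wv w \<in> Wset"
proof (induction w)
  case Nil then show ?case by (simp add: W_one)
next
  case (Cons l w) then show ?case by (cases l) (simp_all add: W_Sp W_Ep)
qed

lemma W_ev: "ev f \<in> Wset"
  unfolding nc_eval_def by (intro W_sum W_msmult W_word)


definition Img :: "(complex poly^3^3) set" where "Img = {M. \<exists>f. nc_fin f \<and> ev f = M}"

lemma Img_word: "wv w \<in> Img"
  unfolding Img_def using nc_fin_mon nc_eval_mon by blast

lemma Img_add: "A \<in> Img \<Longrightarrow> B \<in> Img \<Longrightarrow> A + B \<in> Img"
proof -
  assume "A \<in> Img" "B \<in> Img"
  then obtain f g where "nc_fin f" "ev f = A" "nc_fin g" "ev g = B" unfolding Img_def by blast
  thus ?thesis unfolding Img_def
    by (intro CollectI exI[of _ "\<lambda>w. f w + g w"]) (simp add: nc_fin_add nc_eval_add)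
qed

lemma Img_zero: "0 \<in> Img"
  unfolding Img_def using nc_fin_zero nc_eval_zero by blast

lemma Img_msmult: "A \<in> Img \<Longrightarrow> msmult c A \<in> Img"
proof -
  assume "A \<in> Img"
  then obtain f where "nc_fin f" "ev f = A" unfolding Img_def by blast
  thus ?thesis unfolding Img_def
    by (intro CollectI exI[of _ "\<lambda>w. c * f w"]) (simp add: nc_fin_scale nc_eval_scale)
qed

lemma Img_mult: "A \<in> Img \<Longrightarrow> B \<in> Img \<Longrightarrow> A ** B \<in> Img"
proof -
  assume "A \<in> Img" "B \<in> Img"
  then obtain f g where "nc_fin f" "ev f = A" "nc_fin g" "ev g = B" unfolding Img_def by blast
  thus ?thesis unfolding Img_def
    by (intro CollectI exI[of _ "nc_mult f g"]) (simp add: nc_fin_mult nc_eval_mult)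
qed

lemma Img_sum: "(\<And>k. k \<in> K \<Longrightarrow> M k \<in> Img) \<Longrightarrow> (\<Sum>k\<in>K. M k) \<in> Img"
  by (induction K rule: infinite_finite_induct) (auto intro: Img_add Img_zero)

lemma mat_c_mat3: "mat c ** mat3 a11 a12 a13 a21 a22 a23 a31 a32 a33 =
  mat3 (c*a11) (c*a12) (c*a13) (c*a21) (c*a22) (c*a23) (c*a31) (c*a32) (c*a33)"
  by (simp add: mat3_mat mat3_mult)

lemma ESE: "Ep ** Sp ** Ep = mat (smult 2 Xp) ** Ep"
  by (simp add: Ep_def Sp_def mat_c_mat3 mat3_mult mat3_eq_iff power2_eq_square Xp_def algebra_simps)

lemma wv_chain: "wv (concat (replicate k [A3, A2]) @ [A3]) = mat ((smult 2 Xp)^k) ** Ep"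
proof (induction k)
  case 0 then show ?case by simp
next
  case (Suc k)
  have "wv (concat (replicate (Suc k) [A3, A2]) @ [A3]) = Ep ** Sp ** (mat ((smult 2 Xp)^k) ** Ep)"
    using Suc by (simp add: matrix_mul_assoc)
  also have "\<dots> = mat ((smult 2 Xp)^k) ** (Ep ** Sp ** Ep)"
    by (simp only: matrix_mul_assoc mat_scal_comm2[of "Ep ** Sp"])
  also have "\<dots> = mat ((smult 2 Xp)^Suc k) ** Ep"
    by (simp add: ESE mat_mat_mult mult.commute)
  finally show ?case .
qed

definition Ew :: "nat \<Rightarrow> nat \<Rightarrow> complex poly^3^3" where
  "Ew a b = wv (replicate a A2 @ [A3] @ replicate b A2)"

lemma wv_chain_ab: "wv (replicate a A2 @ concat (replicate k [A3, A2]) @ [A3] @ replicate b A2) = mat ((smult 2 Xp)^k) ** Ew a b"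
proof -
  have "wv (replicate a A2 @ concat (replicate k [A3, A2]) @ [A3] @ replicate b A2)
      = wv (replicate a A2) ** (mat ((smult 2 Xp)^k) ** Ep) ** wv (replicate b A2)"
    using wv_chain[of k] by (simp add: word_val_append matrix_mul_assoc)
  also have "\<dots> = mat ((smult 2 Xp)^k) ** (wv (replicate a A2) ** Ep ** wv (replicate b A2))"
    by (simp only: matrix_mul_assoc mat_scal_comm2[of "wv (replicate a A2)"])
  also have "wv (replicate a A2) ** Ep ** wv (replicate b A2) = Ew a b"
    by (simp add: Ew_def word_val_append matrix_mul_assoc)
  finally show ?thesis .
qed

lemma monom_Ew: "mat (monom c k) ** Ew a b \<in> Img"
proof -
  have "mat (monom c k) ** Ew a b = msmult (c / 2^k) (mat ((smult 2 Xp)^k) ** Ew a b)"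
  proof -
    have "monom c k * m = smult (c / 2^k) ((smult 2 Xp)^k * m)" for m :: "complex poly"
    proof -
      have "(smult 2 Xp)^k = smult (2^k) (monom 1 k)" by (simp only: smult_power monom_altdef smult_1_left Xp_def)
      thus ?thesis by (simp add: smult_monom[symmetric] monom_altdef mult_smult_left)
    qed
    thus ?thesis by (simp add: vec_eq_iff mat_scal_entry msmult_def)
  qed
  also have "\<dots> \<in> Img"
    unfolding wv_chain_ab[symmetric] by (intro Img_msmult Img_word)
  finally show ?thesis .
qed

lemma mat_sum_mult: "mat (\<Sum>k\<in>K. f k) ** (M::complex poly^3^3) = (\<Sum>k\<in>K. mat (f k) ** M)"
  by (induction K rule: infinite_finite_induct) (simp_all add: vec_eq_iff mat_scal_entry distrib_right)

lemma poly_Ew: "mat q ** Ew a b \<in> Img"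
proof -
  have "mat q ** Ew a b = (\<Sum>k\<le>degree q. mat (monom (coeff q k) k) ** Ew a b)"
    by (subst poly_as_sum_of_monoms[symmetric, of q]) (rule mat_sum_mult)
  also have "\<dots> \<in> Img" by (intro Img_sum monom_Ew)
  finally show ?thesis .
qed

lemma Ew_00: "Ew 0 0 = Um ** mat3 1 0 0 0 0 0 0 0 0 ** Tm"
  by (simp add: Ew_def numeral_2_eq_2 Um_def Tm_def Sp_def Ep_def mat3_mult power2_eq_square)

lemma Ew_01: "Ew 0 1 = Um ** mat3 0 1 0 0 0 0 0 0 0 ** Tm"
  by (simp add: Ew_def numeral_2_eq_2 Um_def Tm_def Sp_def Ep_def mat3_mult power2_eq_square)

lemma Ew_02: "Ew 0 2 = Um ** mat3 0 0 1 0 0 0 0 0 0 ** Tm"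
  by (simp add: Ew_def numeral_2_eq_2 Um_def Tm_def Sp_def Ep_def mat3_mult power2_eq_square)

lemma Ew_10: "Ew 1 0 = Um ** mat3 0 0 0 1 0 0 0 0 0 ** Tm"
  by (simp add: Ew_def numeral_2_eq_2 Um_def Tm_def Sp_def Ep_def mat3_mult power2_eq_square)

lemma Ew_11: "Ew 1 1 = Um ** mat3 0 0 0 0 1 0 0 0 0 ** Tm"
  by (simp add: Ew_def numeral_2_eq_2 Um_def Tm_def Sp_def Ep_def mat3_mult power2_eq_square)

lemma Ew_12: "Ew 1 2 = Um ** mat3 0 0 0 0 0 1 0 0 0 ** Tm"
  by (simp add: Ew_def numeral_2_eq_2 Um_def Tm_def Sp_def Ep_def mat3_mult power2_eq_square)

lemma Ew_20: "Ew 2 0 = Um ** mat3 0 0 0 0 0 0 1 0 0 ** Tm"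
  by (simp add: Ew_def numeral_2_eq_2 Um_def Tm_def Sp_def Ep_def mat3_mult power2_eq_square)

lemma Ew_21: "Ew 2 1 = Um ** mat3 0 0 0 0 0 0 0 1 0 ** Tm"
  by (simp add: Ew_def numeral_2_eq_2 Um_def Tm_def Sp_def Ep_def mat3_mult power2_eq_square)

lemma Ew_22: "Ew 2 2 = Um ** mat3 0 0 0 0 0 0 0 0 1 ** Tm"
  by (simp add: Ew_def numeral_2_eq_2 Um_def Tm_def Sp_def Ep_def mat3_mult power2_eq_square)

lemma UQT_expand: "Um ** mat3 q11 q12 q13 q21 q22 q23 q31 q32 q33 ** Tm = mat q11 ** Ew 0 0 + mat q12 ** Ew 0 1 + mat q13 ** Ew 0 2 + mat q21 ** Ew 1 0 + mat q22 ** Ew 1 1 + mat q23 ** Ew 1 2 + mat q31 ** Ew 2 0 + mat q32 ** Ew 2 1 + mat q33 ** Ew 2 2"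
proof -
  have "mat3 q11 q12 q13 q21 q22 q23 q31 q32 q33 = mat q11 ** mat3 1 0 0 0 0 0 0 0 0 + mat q12 ** mat3 0 1 0 0 0 0 0 0 0 + mat q13 ** mat3 0 0 1 0 0 0 0 0 0 + mat q21 ** mat3 0 0 0 1 0 0 0 0 0 + mat q22 ** mat3 0 0 0 0 1 0 0 0 0 + mat q23 ** mat3 0 0 0 0 0 1 0 0 0 + mat q31 ** mat3 0 0 0 0 0 0 1 0 0 + mat q32 ** mat3 0 0 0 0 0 0 0 1 0 + mat q33 ** mat3 0 0 0 0 0 0 0 0 1"
    by (simp add: mat_c_mat3 mat3_add)
  hence "Um ** mat3 q11 q12 q13 q21 q22 q23 q31 q32 q33 ** Tm = Um ** (mat q11 ** mat3 1 0 0 0 0 0 0 0 0) ** Tm + Um ** (mat q12 ** mat3 0 1 0 0 0 0 0 0 0) ** Tm + Um ** (mat q13 ** mat3 0 0 1 0 0 0 0 0 0) ** Tm + Um ** (mat q21 ** mat3 0 0 0 1 0 0 0 0 0) ** Tm + Um ** (mat q22 ** mat3 0 0 0 0 1 0 0 0 0) ** Tm + Um ** (mat q23 ** mat3 0 0 0 0 0 1 0 0 0) ** Tm + Um ** (mat q31 ** mat3 0 0 0 0 0 0 1 0 0) ** Tm + Um ** (mat q32 ** mat3 0 0 0 0 0 0 0 1 0) ** Tm + Um ** (mat q33 ** mat3 0 0 0 0 0 0 0 0 1) ** Tm"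
    by (simp only: matrix_add_ldistrib mmp_add_r)
  also have "\<dots> = mat q11 ** Ew 0 0 + mat q12 ** Ew 0 1 + mat q13 ** Ew 0 2 + mat q21 ** Ew 1 0 + mat q22 ** Ew 1 1 + mat q23 ** Ew 1 2 + mat q31 ** Ew 2 0 + mat q32 ** Ew 2 1 + mat q33 ** Ew 2 2"
    by (simp only: Ew_00 Ew_01 Ew_02 Ew_10 Ew_11 Ew_12 Ew_20 Ew_21 Ew_22 matrix_mul_assoc mat_scal_comm2[of Um])
  finally show ?thesis .
qed

lemma Cm_expand: "Cm c0 c1 c2 = msmult c0 (wv []) + msmult c1 (wv [A2]) + msmult c2 (wv [A2, A2])"
  by (simp add: Cm_def Sp_def mat3_one msmult_def mat3_mult vec_eq_iff forall_3)

lemma W_sub_Img: "Wset \<subseteq> Img"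
proof
  fix \<theta> assume "\<theta> \<in> Wset"
  then obtain c0 c1 c2 Q where th: "\<theta> = Cm c0 c1 c2 + Um ** Q ** Tm" unfolding Wset_def by blast
  have "Um ** Q ** Tm \<in> Img"
    by (subst mat3_eta[of Q], unfold UQT_expand) (intro Img_add poly_Ew)
  moreover have "Cm c0 c1 c2 \<in> Img"
    unfolding Cm_expand by (intro Img_add Img_msmult Img_word)
  ultimately show "\<theta> \<in> Img" unfolding th by (rule Img_add[rotated])
qed


lemma ideal_fin: "f \<in> nc_ideal G \<Longrightarrow> (\<And>g. g \<in> G \<Longrightarrow> nc_fin g) \<Longrightarrow> nc_fin f"
  by (induction rule: nc_ideal.induct) (auto intro: nc_fin_zero nc_fin_add nc_fin_mult)

definition gens :: "ncpoly set" where
  "gens = { nc_mon [A2, A2, A2],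
       (\<lambda>w. nc_mon [A3, A3] w - nc_mon [A3] w),
       (\<lambda>w. nc_mon [A3, A2, A3, A2, A3] w - 4 * nc_mon [A3, A2, A2, A3] w) }"

lemma rel_I_gens: "rel_I = nc_ideal gens" by (simp add: rel_I_def gens_def)

lemma gens_fin: "g \<in> gens \<Longrightarrow> nc_fin g"
  unfolding gens_def by (auto intro!: nc_fin_mon nc_fin_diff nc_fin_scale)

lemma relI_fin: "f \<in> rel_I \<Longrightarrow> nc_fin f"
  unfolding rel_I_gens using ideal_fin gens_fin by blast

lemma gens_ev: "g \<in> gens \<Longrightarrow> ev g = 0"
proof -
  have f1: "nc_fin (nc_mon u)" for u by (rule nc_fin_mon)
  have "ev (nc_mon [A2, A2, A2]) = 0"
    by (simp add: nc_eval_mon Sp_def mat3_mult mat3_zero)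
  moreover have "ev (\<lambda>w. nc_mon [A3, A3] w - nc_mon [A3] w) = 0"
    by (simp add: nc_eval_diff[OF f1 f1] nc_eval_mon Ep_def mat3_mult mat3_diff mat3_zero power2_eq_square algebra_simps)
  moreover have "ev (\<lambda>w. nc_mon [A3, A2, A3, A2, A3] w - 4 * nc_mon [A3, A2, A2, A3] w) = 0"
    by (simp add: nc_eval_diff[OF f1 nc_fin_scale[OF f1]] nc_eval_scale[OF f1] nc_eval_mon Ep_def Sp_def
        msmult_def mat3_mult mat3_diff mat3_zero vec_eq_iff forall_3 power2_eq_square Xp_def algebra_simps)
  ultimately show "g \<in> gens \<Longrightarrow> ev g = 0" unfolding gens_def by blast
qed

lemma ideal_ev: "f \<in> rel_I \<Longrightarrow> ev f = 0"
  unfolding rel_I_gens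
proof (induction rule: nc_ideal.induct)
  case (gen g) then show ?case by (rule gens_ev)
next
  case zero then show ?case by simp
next
  case (add f g) then show ?case
    using ideal_fin[OF add.hyps(1) gens_fin] ideal_fin[OF add.hyps(2) gens_fin] by (simp add: nc_eval_add)
next
  case (lmult f a) then show ?case
    using ideal_fin[OF lmult.hyps(1) gens_fin] by (simp add: nc_eval_mult)
next
  case (rmult f a) then show ?case
    using ideal_fin[OF rmult.hyps(1) gens_fin] by (simp add: nc_eval_mult)
qed

lemma I_gen: "g \<in> gens \<Longrightarrow> g \<in> rel_I" unfolding rel_I_gens by (rule nc_ideal.gen)
lemma I_zero: "(\<lambda>w. 0) \<in> rel_I" unfolding rel_I_gens by (rule nc_ideal.zero)
lemma I_add: "f \<in> rel_I \<Longrightarrow> g \<in> rel_I \<Longrightarrow> (\<lambda>w. f w + g w) \<in> rel_I" unfolding rel_I_gens by (rule nc_ideal.add)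
lemma I_lmon: "f \<in> rel_I \<Longrightarrow> nc_mult (nc_mon u) f \<in> rel_I" unfolding rel_I_gens by (rule nc_ideal.lmult) (auto intro: nc_fin_mon)
lemma I_rmon: "f \<in> rel_I \<Longrightarrow> nc_mult f (nc_mon u) \<in> rel_I" unfolding rel_I_gens by (rule nc_ideal.rmult) (auto intro: nc_fin_mon)

lemma nc_mult_const: "nc_mult (\<lambda>w. if w = [] then c else 0) f = (\<lambda>w. c * f w)"
proof
  fix w
  have "nc_mult (\<lambda>w. if w = [] then c else 0) f w = (\<Sum>i\<le>length w. if i = 0 then c * f w else 0)"
    unfolding nc_mult_def by (intro sum.cong refl) auto
  also have "\<dots> = c * f w" by (simp add: sum.delta)
  finally show "nc_mult (\<lambda>w. if w = [] then c else 0) f w = c * f w" .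
qed

lemma I_scale: "f \<in> rel_I \<Longrightarrow> (\<lambda>w. c * f w) \<in> rel_I"
proof -
  assume "f \<in> rel_I"
  moreover have "nc_fin (\<lambda>w. if w = [] then c else 0)"
    unfolding nc_fin_def by (rule finite_subset[of _ "{[]}"]) auto
  ultimately have "nc_mult (\<lambda>w. if w = [] then c else 0) f \<in> rel_I"
    unfolding rel_I_gens by (rule nc_ideal.lmult)
  thus ?thesis by (simp add: nc_mult_const)
qed

lemma I_sum: "finite A \<Longrightarrow> (\<And>a. a \<in> A \<Longrightarrow> h a \<in> rel_I) \<Longrightarrow> (\<lambda>w. \<Sum>a\<in>A. h a w) \<in> rel_I"
proof (induction A rule: finite_induct)
  case empty then show ?case by (simp add: I_zero)
next
  case (insert a A)
  have "(\<lambda>w. h a w + (\<Sum>a\<in>A. h a w)) \<in> rel_I" using insert by (intro I_add) auto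
  thus ?case using insert by simp
qed

definition ncong :: "ncpoly \<Rightarrow> ncpoly \<Rightarrow> bool" where
  "ncong f g \<longleftrightarrow> (\<lambda>w. f w - g w) \<in> rel_I"

lemma ncong_refl: "ncong f f" unfolding ncong_def using I_zero by simp

lemma ncong_trans: "ncong f g \<Longrightarrow> ncong g h \<Longrightarrow> ncong f h"
  unfolding ncong_def by (drule (1) I_add) simp

lemma ncong_scale: "ncong f g \<Longrightarrow> ncong (\<lambda>w. c * f w) (\<lambda>w. c * g w)"
  unfolding ncong_def by (drule I_scale[where c = c]) (simp add: algebra_simps)

lemma nc_mult_diff_r: "nc_mult h (\<lambda>w. f w - g w) = (\<lambda>w. nc_mult h f w - nc_mult h g w)"
  unfolding nc_mult_def by (simp add: algebra_simps sum_subtractf)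

lemma nc_mult_diff_l: "nc_mult (\<lambda>w. f w - g w) h = (\<lambda>w. nc_mult f h w - nc_mult g h w)"
  unfolding nc_mult_def by (simp add: algebra_simps sum_subtractf)

lemma nc_mult_scale_r: "nc_mult h (\<lambda>w. c * g w) = (\<lambda>w. c * nc_mult h g w)"
  unfolding nc_mult_def by (simp add: algebra_simps sum_distrib_left)

lemma nc_mult_scale_l: "nc_mult (\<lambda>w. c * g w) h = (\<lambda>w. c * nc_mult g h w)"
  unfolding nc_mult_def by (simp add: algebra_simps sum_distrib_left)

lemma ncong_lmon: "ncong f g \<Longrightarrow> ncong (nc_mult (nc_mon u) f) (nc_mult (nc_mon u) g)"
  unfolding ncong_def by (drule I_lmon[where u = u]) (simp add: nc_mult_diff_r)

lemma ncong_rel_r: "(\<lambda>w. f w - g w) \<in> rel_I \<Longrightarrow> ncong (nc_mult f (nc_mon v)) (nc_mult g (nc_mon v))"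
  unfolding ncong_def by (drule I_rmon[where u = v]) (simp add: nc_mult_diff_l)

datatype key = KA nat | KB nat nat nat

fun valid :: "key \<Rightarrow> bool" where
  "valid (KA i) \<longleftrightarrow> i < 3"
| "valid (KB i n j) \<longleftrightarrow> i < 3 \<and> j < 3"

fun bw :: "key \<Rightarrow> gen list" where
  "bw (KA i) = replicate i A2"
| "bw (KB i n j) = replicate i A2 @ concat (replicate n [A3, A2]) @ [A3] @ replicate j A2"

lemma concat_rep: "concat (replicate n [A3, A2]) @ [A3] = A3 # concat (replicate n [A2, A3])"
  by (induction n) simp_all

lemma step_rel: "valid k \<Longrightarrow> \<exists>c k'. valid k' \<and> ncong (nc_mon (l # bw k)) (\<lambda>v. c * nc_mon (bw k') v)"
proof (cases k)
  case (KA i)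
  assume v: "valid k"
  show ?thesis
  proof (cases l)
    case A2
    show ?thesis
    proof (cases "i < 2")
      case True
      have "l # bw k = bw (KA (Suc i))" using KA A2 by simp
      thus ?thesis using True by (intro exI[of _ 1] exI[of _ "KA (Suc i)"]) (simp add: ncong_refl)
    next
      case False
      hence "i = 2" using v KA by simp
      hence "l # bw k = [A2, A2, A2]" using KA A2 by (simp add: numeral_2_eq_2)
      moreover have "nc_mon [A2, A2, A2] \<in> rel_I" by (rule I_gen) (simp add: gens_def)
      ultimately show ?thesis
        by (intro exI[of _ 0] exI[of _ "KA 0"]) (simp add: ncong_def)
    qed
  next
    case A3
    have "l # bw k = bw (KB 0 0 i)" using KA A3 by simp
    thus ?thesis using v KA by (intro exI[of _ 1] exI[of _ "KB 0 0 i"]) (simp add: ncong_refl)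
  qed
next
  case (KB i n j)
  assume v: "valid k"
  show ?thesis
  proof (cases l)
    case A2
    show ?thesis
    proof (cases "i < 2")
      case True
      have "l # bw k = bw (KB (Suc i) n j)" using KB A2 by simp
      thus ?thesis using True v KB by (intro exI[of _ 1] exI[of _ "KB (Suc i) n j"]) (simp add: ncong_refl)
    next
      case False
      hence "i = 2" using v KB by simp
      hence e: "l # bw k = [A2, A2, A2] @ (concat (replicate n [A3, A2]) @ [A3] @ replicate j A2)"
        using KB A2 by (simp add: numeral_2_eq_2)
      have "nc_mult (nc_mon [A2, A2, A2]) (nc_mon (concat (replicate n [A3, A2]) @ [A3] @ replicate j A2)) \<in> rel_I"
        by (rule I_rmon, rule I_gen) (simp add: gens_def)
      hence "nc_mon (l # bw k) \<in> rel_I" by (simp only: e nc_mult_mon)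
      thus ?thesis
        by (intro exI[of _ 0] exI[of _ "KA 0"]) (simp add: ncong_def)
    qed
  next
    case A3
    consider "i = 0" | "i = 1" | "i = 2" using v KB by force
    then show ?thesis
    proof cases
      case 1
      define rest where "rest = concat (replicate n [A2, A3]) @ replicate j A2"
      have e1: "l # bw k = [A3, A3] @ rest" using KB A3 1 by (simp add: rest_def concat_rep)
      have e2: "bw (KB 0 n j) = [A3] @ rest" by (simp add: rest_def concat_rep)
      have "(\<lambda>w. nc_mon [A3, A3] w - nc_mon [A3] w) \<in> rel_I" by (rule I_gen) (simp add: gens_def)
      hence "ncong (nc_mult (nc_mon [A3, A3]) (nc_mon rest)) (nc_mult (nc_mon [A3]) (nc_mon rest))"
        by (rule ncong_rel_r)
      hence h: "ncong (nc_mon ([A3, A3] @ rest)) (nc_mon ([A3] @ rest))"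
        by (simp only: nc_mult_mon)
      have "ncong (nc_mon (l # bw k)) (\<lambda>v. 1 * nc_mon (bw (KB 0 n j)) v)"
        using h unfolding e1 e2 by simp
      thus ?thesis using v KB by (intro exI[of _ 1] exI[of _ "KB 0 n j"]) simp
    next
      case 2
      have "l # bw k = bw (KB 0 (Suc n) j)" using KB A3 2 by simp
      thus ?thesis using v KB by (intro exI[of _ 1] exI[of _ "KB 0 (Suc n) j"]) (simp add: ncong_refl)
    next
      case 3
      define rest where "rest = concat (replicate n [A2, A3]) @ replicate j A2"
      have e1: "l # bw k = [A3, A2, A2, A3] @ rest" using KB A3 3
        by (simp add: rest_def numeral_2_eq_2 concat_rep)
      have e2: "bw (KB 0 (Suc (Suc n)) j) = [A3, A2, A3, A2, A3] @ rest"
        by (simp add: rest_def concat_rep)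
      have "(\<lambda>w. nc_mon [A3, A2, A3, A2, A3] w - 4 * nc_mon [A3, A2, A2, A3] w) \<in> rel_I"
        by (rule I_gen) (simp add: gens_def)
      hence "(\<lambda>w. (-1/4) * (nc_mon [A3, A2, A3, A2, A3] w - 4 * nc_mon [A3, A2, A2, A3] w)) \<in> rel_I"
        by (rule I_scale)
      hence "nc_mult (\<lambda>w. (-1/4) * (nc_mon [A3, A2, A3, A2, A3] w - 4 * nc_mon [A3, A2, A2, A3] w)) (nc_mon rest) \<in> rel_I"
        by (rule I_rmon)
      moreover have "nc_mult (\<lambda>w. (-1/4) * (nc_mon [A3, A2, A3, A2, A3] w - 4 * nc_mon [A3, A2, A2, A3] w)) (nc_mon rest)
          = (\<lambda>w. nc_mon (l # bw k) w - 1/4 * nc_mon (bw (KB 0 (Suc (Suc n)) j)) w)"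
      proof -
        have eq: "(\<lambda>w. (-1/4) * (nc_mon [A3, A2, A3, A2, A3] w - 4 * nc_mon [A3, A2, A2, A3] w))
            = (\<lambda>w. nc_mon [A3, A2, A2, A3] w - (1/4) * nc_mon [A3, A2, A3, A2, A3] w)"
          by (simp add: algebra_simps)
        show ?thesis unfolding eq e1 e2 by (simp only: nc_mult_diff_l nc_mult_scale_l nc_mult_mon)
      qed
      ultimately have "ncong (nc_mon (l # bw k)) (\<lambda>v. (1/4) * nc_mon (bw (KB 0 (Suc (Suc n)) j)) v)"
        unfolding ncong_def by simp
      thus ?thesis using v KB by (intro exI[of _ "1/4"] exI[of _ "KB 0 (Suc (Suc n)) j"]) simp
    qed
  qed
qed

lemma word_reduce: "\<exists>c k. valid k \<and> ncong (nc_mon w) (\<lambda>v. c * nc_mon (bw k) v)"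
proof (induction w)
  case Nil
  show ?case by (intro exI[of _ 1] exI[of _ "KA 0"]) (simp add: ncong_refl)
next
  case (Cons l w)
  then obtain c k where ck: "valid k" "ncong (nc_mon w) (\<lambda>v. c * nc_mon (bw k) v)" by blast
  have "ncong (nc_mult (nc_mon [l]) (nc_mon w)) (nc_mult (nc_mon [l]) (\<lambda>v. c * nc_mon (bw k) v))"
    by (rule ncong_lmon[OF ck(2)])
  hence h1: "ncong (nc_mon (l # w)) (\<lambda>v. c * nc_mon (l # bw k) v)"
    by (simp add: nc_mult_mon nc_mult_scale_r)
  obtain c' k' where ck': "valid k'" "ncong (nc_mon (l # bw k)) (\<lambda>v. c' * nc_mon (bw k') v)"
    using step_rel[OF ck(1)] by blast
  have "ncong (\<lambda>v. c * nc_mon (l # bw k) v) (\<lambda>v. c * (c' * nc_mon (bw k') v))"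
    using ncong_scale[OF ck'(2)] by simp
  hence "ncong (nc_mon (l # w)) (\<lambda>v. (c * c') * nc_mon (bw k') v)"
    using ncong_trans[OF h1] by (simp add: mult.assoc)
  thus ?case using ck'(1) by blast
qed


definition idx :: "nat \<Rightarrow> 3" where "idx i = (if i = 0 then 1 else if i = 1 then 2 else 3)"

lemma idx_inj: "i < 3 \<Longrightarrow> i' < 3 \<Longrightarrow> idx i = idx i' \<longleftrightarrow> i = i'"
  by (auto simp: idx_def)

definition Eu :: "nat \<Rightarrow> nat \<Rightarrow> complex poly^3^3" where
  "Eu a b = mat3 (if idx a = 1 \<and> idx b = 1 then 1 else 0) (if idx a = 1 \<and> idx b = 2 then 1 else 0) (if idx a = 1 \<and> idx b = 3 then 1 else 0)
  (if idx a = 2 \<and> idx b = 1 then 1 else 0) (if idx a = 2 \<and> idx b = 2 then 1 else 0) (if idx a = 2 \<and> idx b = 3 then 1 else 0)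
  (if idx a = 3 \<and> idx b = 1 then 1 else 0) (if idx a = 3 \<and> idx b = 2 then 1 else 0) (if idx a = 3 \<and> idx b = 3 then 1 else 0)"

lemma Eu_entry: "Eu a b $ r $ s = (if r = idx a \<and> s = idx b then 1 else 0)"
  using exhaust_3[of r] exhaust_3[of s] by (elim disjE) (auto simp: Eu_def)

lemmas Eu_mat3 = Eu_def

lemma Ew_Eu: "a < 3 \<Longrightarrow> b < 3 \<Longrightarrow> Ew a b = Um ** Eu a b ** Tm"
proof -
  assume "a < 3" "b < 3"
  hence "a = 0 \<or> a = 1 \<or> a = 2" "b = 0 \<or> b = 1 \<or> b = 2" by auto
  thus ?thesis
    by (elim disjE) (simp_all add: Eu_def idx_def Ew_00 Ew_01[simplified] Ew_02 Ew_10[simplified] Ew_11[simplified] Ew_12[simplified] Ew_20 Ew_21[simplified] Ew_22)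
qed

lemma Uadj_U: "Uadj ** Um = mat (Xp^3)"
  by (simp add: Uadj_def Um_def mat3_mult mat3_mat algebra_simps power2_eq_square power3_eq_cube)
lemma T_N: "Tm ** Nm = mat (Xp^3)"
  by (simp add: Tm_def Nm_def mat3_mult mat3_mat algebra_simps power2_eq_square power3_eq_cube)

lemma sandwich: "Uadj ** (mat c ** (Um ** M ** Tm)) ** Nm = mat (c * Xp^6) ** M"
proof -
  have "Uadj ** (mat c ** (Um ** M ** Tm)) ** Nm = mat c ** ((Uadj ** Um) ** M ** (Tm ** Nm))"
    by (simp only: matrix_mul_assoc mat_scal_comm2[of Uadj])
  also have "\<dots> = mat c ** (mat (Xp^3) ** (mat (Xp^3) ** M))"
    by (simp only: Uadj_U T_N matrix_mul_assoc[symmetric] mat_scal_comm2[of M])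
  also have "\<dots> = mat (c * Xp^6) ** M"
    by (simp add: mat_mat_mult mult.assoc flip: power_add)
  finally show ?thesis .
qed

definition phi :: "key \<Rightarrow> complex poly^3^3 \<Rightarrow> complex" where
  "phi k M = (case k of KA i \<Rightarrow> coeff ((Uadj ** M ** Nm) $ idx i $ 3) 4
     | KB i n j \<Rightarrow> coeff ((Uadj ** M ** Nm) $ idx i $ idx j) (n + 6) / 2^n)"

lemma phi_lin: "phi k (\<Sum>a\<in>A. msmult (c a) (M a)) = (\<Sum>a\<in>A. c a * phi k (M a))"
proof -
  have e: "Uadj ** (\<Sum>a\<in>A. msmult (c a) (M a)) ** Nm = (\<Sum>a\<in>A. msmult (c a) (Uadj ** M a ** Nm))"
    by (simp add: mmult_sum_l mmult_sum_r msmult_mult_l msmult_mult_r)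
  show ?thesis unfolding phi_def e
    by (cases k) (simp_all add: msmult_def coeff_sum sum_divide_distrib)
qed

lemma wv_KA: "wv (replicate 0 A2) = mat 1" "wv (replicate 1 A2) = Sp" "wv (replicate 2 A2) = Sp ** Sp"
  by (simp_all add: numeral_2_eq_2)

lemma sand_KA:
  "Uadj ** mat 1 ** Nm = mat3 0 0 (monom 1 4) 0 (monom 1 4) (smult (-2) (monom 1 3)) (monom 1 4) (smult (-2) (monom 1 3)) (monom 3 2)"
  "Uadj ** Sp ** Nm = mat3 0 0 0 0 0 (monom 1 4) 0 (monom 1 4) (smult (-2) (monom 1 3))"
  "Uadj ** (Sp ** Sp) ** Nm = mat3 0 0 0 0 0 0 0 0 (monom 1 4)"
  by (simp_all add: Uadj_def Nm_def Sp_def mat3_one mat3_mult monom_altdef Xp_def algebra_simps power2_eq_square power3_eq_cube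
      eval_nat_numeral)

lemma wv_KB: "wv (bw (KB i n j)) = mat ((smult 2 Xp)^n) ** Ew i j"
  using wv_chain_ab by simp

lemma sand_KB: "i < 3 \<Longrightarrow> j < 3 \<Longrightarrow> Uadj ** wv (bw (KB i n j)) ** Nm = mat (smult (2^n) (monom 1 (n+6))) ** Eu i j"
proof -
  assume "i < 3" "j < 3"
  have "(smult 2 Xp)^n * Xp^6 = smult (2^n) (monom 1 (n+6))"
    by (simp only: smult_power mult_smult_left monom_altdef smult_1_left power_add Xp_def)
  thus ?thesis unfolding wv_KB Ew_Eu[OF \<open>i < 3\<close> \<open>j < 3\<close>] sandwich by simp
qed

lemma sand_KA_gen: "i' < 3 \<Longrightarrow> Uadj ** wv (bw (KA i')) ** Nm =
   (if i' = 0 then mat3 0 0 (monom 1 4) 0 (monom 1 4) (smult (-2) (monom 1 3)) (monom 1 4) (smult (-2) (monom 1 3)) (monom 3 2)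
    else if i' = 1 then mat3 0 0 0 0 0 (monom 1 4) 0 (monom 1 4) (smult (-2) (monom 1 3))
    else mat3 0 0 0 0 0 0 0 0 (monom 1 4))"
proof -
  assume "i' < 3"
  hence "i' = 0 \<or> i' = 1 \<or> i' = 2" by auto
  thus ?thesis
  proof (elim disjE)
    assume "i' = 0" thus ?thesis using sand_KA(1) by simp
  next
    assume "i' = 1" thus ?thesis using sand_KA(2) by simp
  next
    assume "i' = 2" thus ?thesis using sand_KA(3) by (simp add: numeral_2_eq_2)
  qed
qed

lemma coeff_mat3_high: "m > 4 \<Longrightarrow> coeff (mat3 a11 a12 a13 a21 a22 a23 a31 a32 a33 $ r $ s) m = 0"
  if "\<forall>p \<in> {a11, a12, a13, a21, a22, a23, a31, a32, a33}. degree p \<le> 4"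
  using that exhaust_3[of r] exhaust_3[of s] by (elim disjE) (auto intro!: coeff_eq_0)

lemma phi_KB_KA: "i' < 3 \<Longrightarrow> phi (KB i n j) (wv (bw (KA i'))) = 0"
proof -
  assume i': "i' < 3"
  have dg: "degree (monom (c::complex) k) \<le> 4" "degree (smult d (monom (c::complex) k)) \<le> 4" if "k \<le> 4" for c d k
    using that by (auto intro: order.trans[OF degree_monom_le] order.trans[OF degree_smult_le])
  have "coeff ((Uadj ** wv (bw (KA i')) ** Nm) $ idx i $ idx j) (n + 6) = 0"
    unfolding sand_KA_gen[OF i'] by (auto intro!: coeff_mat3_high dg)
  thus ?thesis by (simp add: phi_def)
qed

lemma phi_KA_KA: "i < 3 \<Longrightarrow> i' < 3 \<Longrightarrow> phi (KA i) (wv (bw (KA i'))) = (if i = i' then 1 else 0)"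
proof -
  assume i: "i < 3" and i': "i' < 3"
  hence "i = 0 \<or> i = 1 \<or> i = 2" "i' = 0 \<or> i' = 1 \<or> i' = 2" by auto
  thus ?thesis unfolding phi_def using sand_KA_gen[OF i']
    by (elim disjE) (simp_all add: idx_def coeff_monom)
qed

lemma sand_KB_entry: "i' < 3 \<Longrightarrow> j' < 3 \<Longrightarrow> (Uadj ** wv (bw (KB i' n' j')) ** Nm) $ r $ s =
   (if r = idx i' \<and> s = idx j' then smult (2^n') (monom 1 (n'+6)) else 0)"
  by (simp add: sand_KB mat_scal_entry Eu_entry del: bw.simps)

lemma phi_KA_KB: "i' < 3 \<Longrightarrow> j' < 3 \<Longrightarrow> phi (KA i) (wv (bw (KB i' n' j'))) = 0"
  by (simp add: phi_def sand_KB_entry coeff_monom del: bw.simps)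

lemma phi_KB_KB: "i < 3 \<Longrightarrow> j < 3 \<Longrightarrow> i' < 3 \<Longrightarrow> j' < 3 \<Longrightarrow>
   phi (KB i n j) (wv (bw (KB i' n' j'))) = (if i = i' \<and> n = n' \<and> j = j' then 1 else 0)"
  by (auto simp: phi_def sand_KB_entry coeff_monom idx_inj simp del: bw.simps)

lemma phi_basis: "valid k \<Longrightarrow> valid k' \<Longrightarrow> phi k (wv (bw k')) = (if k = k' then 1 else 0)"
  by (cases k; cases k') (simp_all only: valid.simps phi_KA_KA phi_KB_KA phi_KA_KB phi_KB_KB key.inject key.distinct if_False)

lemma bw_inj: "valid k \<Longrightarrow> valid k' \<Longrightarrow> bw k = bw k' \<Longrightarrow> k = k'"
proof -
  assume v: "valid k" "valid k'" and e: "bw k = bw k'"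
  have "phi k (wv (bw k')) = 1" using phi_basis[OF v(1) v(1)] e by simp
  thus "k = k'" using phi_basis[OF v] by (auto split: if_splits)
qed

lemma phi_zero: "phi k 0 = 0"
  by (cases k) (simp_all add: phi_def)

lemma kernel_sub: "nc_fin f \<Longrightarrow> ev f = 0 \<Longrightarrow> f \<in> rel_I"
proof -
  assume ff: "nc_fin f" and e0: "ev f = 0"
  define C where "C w = (SOME c. \<exists>k. valid k \<and> ncong (nc_mon w) (\<lambda>v. c * nc_mon (bw k) v))" for w
  have h1: "\<exists>k. valid k \<and> ncong (nc_mon w) (\<lambda>v. C w * nc_mon (bw k) v)" for w
    unfolding C_def by (rule someI_ex) (rule word_reduce)
  define K where "K w = (SOME k. valid k \<and> ncong (nc_mon w) (\<lambda>v. C w * nc_mon (bw k) v))" for w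
  have h2: "valid (K w) \<and> ncong (nc_mon w) (\<lambda>v. C w * nc_mon (bw (K w)) v)" for w
    unfolding K_def by (rule someI_ex) (rule h1)
  have vK: "valid (K w)" for w using h2 by blast
  have cK: "ncong (nc_mon w) (\<lambda>v. C w * nc_mon (bw (K w)) v)" for w using h2 by blast
  define A where "A = supp f"
  have finA: "finite A" using ff by (simp add: A_def nc_fin_supp)
  define g where "g = (\<lambda>v. \<Sum>w\<in>A. (f w * C w) * nc_mon (bw (K w)) v)"
  have fg: "(\<lambda>v. f v - g v) \<in> rel_I"
  proof -
    have "(\<lambda>v. f v - g v) = (\<lambda>v. \<Sum>w\<in>A. f w * (nc_mon w v - C w * nc_mon (bw (K w)) v))"
    proof
      fix v
      have "f v = (\<Sum>w\<in>A. f w * nc_mon w v)"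
        using fun_cong[OF nc_decomp[OF ff], of v] unfolding A_def by simp
      thus "f v - g v = (\<Sum>w\<in>A. f w * (nc_mon w v - C w * nc_mon (bw (K w)) v))"
        by (simp add: g_def algebra_simps sum_subtractf)
    qed
    also have "\<dots> \<in> rel_I"
    proof (rule I_sum[OF finA])
      fix w
      have "(\<lambda>v. nc_mon w v - C w * nc_mon (bw (K w)) v) \<in> rel_I" using cK[of w] by (simp add: ncong_def)
      thus "(\<lambda>v. f w * (nc_mon w v - C w * nc_mon (bw (K w)) v)) \<in> rel_I" by (rule I_scale)
    qed
    finally show ?thesis .
  qed
  have gfin: "nc_fin g" unfolding g_def using finA by (intro nc_fin_sum nc_fin_scale nc_fin_mon)
  have "ev (\<lambda>v. f v - g v) = 0" by (rule ideal_ev[OF fg])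
  hence evg: "ev g = 0" using nc_eval_diff[OF ff gfin] e0 by simp
  have evg': "ev g = (\<Sum>w\<in>A. msmult (f w * C w) (wv (bw (K w))))"
    unfolding g_def by (rule nc_eval_lincomb[OF finA])
  have coef0: "(\<Sum>w\<in>A. (f w * C w) * (if key = K w then 1 else 0)) = 0" if vkey: "valid key" for key
  proof -
    have "0 = phi key (ev g)" using evg by (simp add: phi_zero)
    also have "\<dots> = (\<Sum>w\<in>A. (f w * C w) * phi key (wv (bw (K w))))" unfolding evg' by (rule phi_lin)
    also have "\<dots> = (\<Sum>w\<in>A. (f w * C w) * (if key = K w then 1 else 0))"
      by (intro sum.cong refl) (simp only: phi_basis[OF vkey vK])
    finally show ?thesis by simp
  qed
  have g0: "g = (\<lambda>v. 0)"
  proof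
    fix v
    show "g v = 0"
    proof (cases "\<exists>w0\<in>A. v = bw (K w0)")
      case True
      then obtain w0 where v: "v = bw (K w0)" by blast
      have "nc_mon (bw (K w)) v = (if K w0 = K w then 1 else 0)" for w
      proof -
        have "(bw (K w) = bw (K w0)) = (K w0 = K w)" using bw_inj[OF vK[of w] vK[of w0]] by auto
        thus ?thesis unfolding v nc_mon_def by (simp add: eq_commute[of "bw (K w0)"])
      qed
      hence "g v = (\<Sum>w\<in>A. (f w * C w) * (if K w0 = K w then 1 else 0))" unfolding g_def by simp
      thus ?thesis using coef0[OF vK[of w0]] by simp
    next
      case False
      hence "nc_mon (bw (K w)) v = 0" if "w \<in> A" for w using that unfolding nc_mon_def by auto
      thus ?thesis unfolding g_def by simp
    qed
  qed
  show "f \<in> rel_I" using fg by (simp add: g0)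
qed


lemma A_eq_W: "A_set = Wset" using A_sub_W W_sub_A by blast

theorem theorem2:
  shows "Gamma_set = A_set \<and>
    (\<exists>a2 a3. a2 \<in> A_set \<and> a3 \<in> A_set \<and>
       (\<forall>f. nc_fin f \<longrightarrow> nc_eval a2 a3 f \<in> A_set) \<and>
       (\<forall>\<theta>\<in>A_set. \<exists>f. nc_fin f \<and> nc_eval a2 a3 f = \<theta>) \<and>
       (\<forall>f. nc_fin f \<longrightarrow> (nc_eval a2 a3 f = 0 \<longleftrightarrow> f \<in> rel_I)))"
proof -
  have g: "Gamma_set = A_set" by (simp add: Gamma_eq_W A_eq_W)
  have s: "Sp \<in> A_set" using W_word[of "[A2]"] by (simp add: A_eq_W)
  have e: "Ep \<in> A_set" using W_word[of "[A3]"] by (simp add: A_eq_W)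
  have c: "\<forall>f. nc_fin f \<longrightarrow> ev f \<in> A_set" using W_ev by (simp add: A_eq_W)
  have su: "\<forall>\<theta>\<in>A_set. \<exists>f. nc_fin f \<and> ev f = \<theta>"
  proof
    fix \<theta> assume "\<theta> \<in> A_set"
    hence "\<theta> \<in> Img" using W_sub_Img by (auto simp: A_eq_W)
    thus "\<exists>f. nc_fin f \<and> ev f = \<theta>" unfolding Img_def by blast
  qed
  have k: "\<forall>f. nc_fin f \<longrightarrow> (ev f = 0 \<longleftrightarrow> f \<in> rel_I)"
    using kernel_sub ideal_ev by blast
  show ?thesis using g s e c su k by blast
qed


end
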